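(* Let $n \ge 1$ and $m \ge 1$ be integers, let $\lambda > 1$ be a real number, and let the coefficients $a_\alpha$, $a$, $b$ be as in the context. Suppose that for some real number $\sigma > 1$, $$\int_1^\infty r^{(m - n)\lambda + n - 1} q(r)\, dr = \infty, \qquad \text{where } q(r) = \left( \frac{1}{r^n} \int_{B_{\sigma r} \setminus B_{r/\sigma}} a^{\lambda/(\lambda-1)}(x)\, b^{-1/(\lambda-1)}(x)\, dx \right)^{1-\lambda},$$ with the convention that $q(r) = 0$ whenever the integral inside the parentheses equals $\infty$. Then every solution $u$ of the inequality $$\sum_{|\alpha| = m} (-1)^m \partial^\alpha a_\alpha(x, u) \ge b(x) |u|^\lambda \quad \text{in } \mathbb{R}^n$$ is trivial, i.e. $u(x) = 0$ for almost all $x \in \mathbb{R}^n$.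
   Context: For each multi-index $\alpha = (\alpha_1,\dots,\alpha_n)$ with $|\alpha| = \alpha_1 + \dots + \alpha_n = m$, $a_\alpha : \mathbb{R}^n \times \mathbb{R} \to \mathbb{R}$ is a given function, and $\partial^\alpha = \partial^{|\alpha|}/\partial x_1^{\alpha_1}\cdots\partial x_n^{\alpha_n}$. The function $b : \mathbb{R}^n \to (0,\infty)$ is measurable and positive, and there is a positive measurable function $a : \mathbb{R}^n \to (0,\infty)$ such that $|a_\alpha(x,\zeta)| \le a(x)|\zeta|$ for almost all $x \in \mathbb{R}^n$, all $\zeta \in \mathbb{R}$ and all $|\alpha| = m$. $B_r$ denotes the open ball in $\mathbb{R}^n$ of radius $r>0$ centered at the origin. A function $u$ is called a solution of the inequality if $b(x)|u|^\lambda \in L_{1,loc}(\mathbb{R}^n)$, $a_\alpha(x,u) \in L_{1,loc}(\mathbb{R}^n)$ for all $|\alpha| = m$, and $$\int_{\mathbb{R}^n} \sum_{|\alpha|=m} a_\alpha(x,u)\, \partial^\alpha \varphi \, dx \ge \int_{\mathbb{R}^n} b(x)|u|^\lambda \varphi\, dx$$ for every non-negative $\varphi \in C_0^\infty(\mathbb{R}^n)$. *)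

theory Defs
  imports "HOL-Analysis.Analysis"
begin

definition pdiff :: "'n::finite \<Rightarrow> (real^'n \<Rightarrow> real) \<Rightarrow> real^'n \<Rightarrow> real" where
  "pdiff i f x = deriv (\<lambda>t. f (x + t *\<^sub>R axis i 1)) 0"

fun pdiffs :: "'n::finite list \<Rightarrow> (real^'n \<Rightarrow> real) \<Rightarrow> real^'n \<Rightarrow> real" where
  "pdiffs [] f = f"
| "pdiffs (i # is) f = pdiff i (pdiffs is f)"

text \<open>Multi-index order and the derivative \<partial>^\<alpha> (for smooth functions the
  order of differentiation is irrelevant; we pick any list realising \<alpha>).\<close>
definition mi_order :: "('n::finite \<Rightarrow> nat) \<Rightarrow> nat" where
  "mi_order \<alpha> = (\<Sum>i\<in>UNIV. \<alpha> i)"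

definition Dalpha :: "('n::finite \<Rightarrow> nat) \<Rightarrow> (real^'n \<Rightarrow> real) \<Rightarrow> real^'n \<Rightarrow> real" where
  "Dalpha \<alpha> f = pdiffs (SOME is. \<forall>i. count_list is i = \<alpha> i) f"

definition smooth_fun :: "(real^'n::finite \<Rightarrow> real) \<Rightarrow> bool" where
  "smooth_fun f \<longleftrightarrow> (\<forall>is. continuous_on UNIV (pdiffs is f) \<and>
      (\<forall>i x. (\<lambda>t. pdiffs is f (x + t *\<^sub>R axis i 1)) differentiable (at 0)))"

definition test_fun :: "(real^'n::finite \<Rightarrow> real) \<Rightarrow> bool" where
  "test_fun f \<longleftrightarrow> smooth_fun f \<and> compact (closure {x. f x \<noteq> 0})"

definition loc_integrable :: "(real^'n::finite \<Rightarrow> real) \<Rightarrow> bool" where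
  "loc_integrable f \<longleftrightarrow> (\<forall>K. compact K \<longrightarrow> set_integrable lebesgue K f)"

definition is_solution ::
  "nat \<Rightarrow> real \<Rightarrow> (('n::finite \<Rightarrow> nat) \<Rightarrow> real^'n \<Rightarrow> real \<Rightarrow> real) \<Rightarrow> (real^'n \<Rightarrow> real)
     \<Rightarrow> (real^'n \<Rightarrow> real) \<Rightarrow> bool" where
  "is_solution m lam A b u \<longleftrightarrow>
     loc_integrable (\<lambda>x. b x * \<bar>u x\<bar> powr lam) \<and>
     (\<forall>\<alpha>. mi_order \<alpha> = m \<longrightarrow> loc_integrable (\<lambda>x. A \<alpha> x (u x))) \<and>
     (\<forall>\<phi>. test_fun \<phi> \<and> (\<forall>x. \<phi> x \<ge> 0) \<longrightarrow>
        (\<integral>x. (\<Sum>\<alpha>\<in>{\<alpha>. mi_order \<alpha> = m}. A \<alpha> x (u x) * Dalpha \<alpha> \<phi> x) \<partial>lebesgue)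
        \<ge> (\<integral>x. b x * \<bar>u x\<bar> powr lam * \<phi> x \<partial>lebesgue))"

definition qfun :: "real \<Rightarrow> real \<Rightarrow> (real^'n::finite \<Rightarrow> real) \<Rightarrow> (real^'n \<Rightarrow> real) \<Rightarrow> real \<Rightarrow> ennreal" where
  "qfun lam \<sigma> a b r =
     (let I = (\<integral>\<^sup>+ x \<in> ball 0 (\<sigma> * r) - ball 0 (r / \<sigma>).
                 ennreal (a x powr (lam / (lam - 1)) * b x powr (- 1 / (lam - 1))) \<partial>lebesgue)
      in if I = \<infinity> then 0
         else ennreal ((enn2real I / r ^ CARD('n)) powr (1 - lam)))"

end

theory Submission
  imports Defs "HOL-Computational_Algebra.Polynomial"
begin

definition Cu :: "nat \<Rightarrow> (real \<Rightarrow> real) \<Rightarrow> bool" where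
  "Cu N h \<longleftrightarrow> (\<forall>j\<le>N. \<forall>t. (deriv ^^ j) h differentiable at t)"

definition Cinf :: "(real \<Rightarrow> real) \<Rightarrow> bool" where
  "Cinf h \<longleftrightarrow> (\<forall>N. Cu N h)"

lemma Cu_0: "Cu 0 h \<longleftrightarrow> (\<forall>t. h differentiable at t)"
  by (simp add: Cu_def)

lemma Cu_Suc: "Cu (Suc N) h \<longleftrightarrow> (\<forall>t. h differentiable at t) \<and> Cu N (deriv h)"
proof -
  have e: "(deriv ^^ Suc j) h = (deriv ^^ j) (deriv h)" for j
    by (simp add: funpow_Suc_right del: funpow.simps)
  show ?thesis
    unfolding Cu_def
  proof (intro iffI conjI allI impI)
    fix t assume "\<forall>j\<le>Suc N. \<forall>t. (deriv ^^ j) h differentiable at t"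
    then show "h differentiable at t" by (metis funpow_0 le0)
  next
    fix j t assume A: "\<forall>j\<le>Suc N. \<forall>t. (deriv ^^ j) h differentiable at t" and "j \<le> N"
    then have "(deriv ^^ Suc j) h differentiable at t" by (metis Suc_le_mono)
    then show "(deriv ^^ j) (deriv h) differentiable at t" by (simp only: e)
  next
    fix j t assume A: "(\<forall>t. h differentiable at t) \<and> (\<forall>j\<le>N. \<forall>t. (deriv ^^ j) (deriv h) differentiable at t)"
      and j: "j \<le> Suc N"
    show "(deriv ^^ j) h differentiable at t"
    proof (cases j)
      case 0 then show ?thesis using A by simp
    next
      case (Suc j') then show ?thesis using A j e by simp
    qed
  qed
qed

lemma Cu_mono: "Cu N h \<Longrightarrow> M \<le> N \<Longrightarrow> Cu M h"
  by (auto simp: Cu_def)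

lemma Cu_diff: "Cu N h \<Longrightarrow> h differentiable at t"
  using Cu_mono[of N h 0] by (simp add: Cu_0)

lemma deriv_has: "(\<And>t. h differentiable at t) \<Longrightarrow> (h has_real_derivative deriv h t) (at t)"
  using DERIV_deriv_iff_real_differentiable by blast

lemma Cu_const: "Cu N (\<lambda>t. c)"
proof (induction N arbitrary: c)
  case 0 then show ?case by (simp add: Cu_0)
next
  case (Suc N)
  have "deriv (\<lambda>t. c) = (\<lambda>t. 0)" by (rule ext) (rule DERIV_imp_deriv, auto intro!: derivative_eq_intros)
  with Suc.IH[of 0] show ?case using Cu_Suc by auto
qed

lemma Cu_add: "Cu N f \<Longrightarrow> Cu N g \<Longrightarrow> Cu N (\<lambda>t. f t + g t)"
proof (induction N arbitrary: f g)
  case 0 then show ?case by (simp add: Cu_0)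
next
  case (Suc N)
  have df: "\<And>t. f differentiable at t" and dg: "\<And>t. g differentiable at t"
    using Suc.prems Cu_Suc by auto
  have "deriv (\<lambda>t. f t + g t) = (\<lambda>t. deriv f t + deriv g t)"
    by (rule ext, rule DERIV_imp_deriv, auto intro!: derivative_eq_intros deriv_has df dg)
  moreover have "Cu N (\<lambda>t. deriv f t + deriv g t)"
    using Suc Cu_Suc by auto
  ultimately show ?case using Cu_Suc df dg by auto
qed

lemma Cu_mult: "Cu N f \<Longrightarrow> Cu N g \<Longrightarrow> Cu N (\<lambda>t. f t * g t)"
proof (induction N arbitrary: f g)
  case 0 then show ?case by (simp add: Cu_0)
next
  case (Suc N)
  have df: "\<And>t. f differentiable at t" and dg: "\<And>t. g differentiable at t"
    using Suc.prems Cu_Suc by auto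
  have "deriv (\<lambda>t. f t * g t) = (\<lambda>t. deriv f t * g t + f t * deriv g t)"
    by (rule ext, rule DERIV_imp_deriv, auto intro!: derivative_eq_intros deriv_has df dg)
  moreover have "Cu N f" "Cu N g" using Suc.prems Cu_mono by auto
  moreover have "Cu N (deriv f)" "Cu N (deriv g)" using Suc.prems Cu_Suc by auto
  ultimately have "Cu N (deriv (\<lambda>t. f t * g t))"
    using Suc.IH Cu_add by simp
  then show ?case using Cu_Suc df dg by auto
qed

lemma Cu_cmult: "Cu N f \<Longrightarrow> Cu N (\<lambda>t. c * f t)"
  using Cu_mult[OF Cu_const] by blast

lemma Cu_compose: "Cu N h \<Longrightarrow> Cu N g \<Longrightarrow> Cu N (\<lambda>t. h (g t))"
proof (induction N arbitrary: h)
  case 0 then show ?case using differentiable_chain_at[of g _ h] by (auto simp: Cu_0 o_def)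
next
  case (Suc N)
  have dh: "\<And>t. h differentiable at t" and dg: "\<And>t. g differentiable at t"
    using Suc.prems Cu_Suc by auto
  have "deriv (\<lambda>t. h (g t)) = (\<lambda>t. deriv h (g t) * deriv g t)"
    by (rule ext, rule DERIV_imp_deriv, rule DERIV_chain2[OF deriv_has deriv_has], auto intro: dh dg)
  moreover have "Cu N (\<lambda>t. deriv h (g t))"
    using Suc Cu_Suc Cu_mono by auto
  moreover have "Cu N (deriv g)" using Suc.prems Cu_Suc by auto
  ultimately show ?case using Cu_Suc dh dg Cu_mult differentiable_chain_at[of g _ h] by (auto simp: o_def)
qed

lemma Cu_inverse:
  assumes "\<And>t. g t \<noteq> 0"
  shows "Cu N g \<Longrightarrow> Cu N (\<lambda>t. inverse (g t))"
proof (induction N)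
  case 0
  then show ?case using assms by (auto simp: Cu_0 real_differentiable_def intro!: derivative_eq_intros)
next
  case (Suc N)
  have dg: "\<And>t. g differentiable at t"
    using Suc.prems Cu_Suc by auto
  have d1: "\<And>t. (\<lambda>t. inverse (g t)) differentiable at t"
    using dg assms by (auto simp: real_differentiable_def intro!: derivative_eq_intros)
  have "deriv (\<lambda>t. inverse (g t)) = (\<lambda>t. (-1) * (deriv g t * (inverse (g t) * inverse (g t))))"
    by (rule ext, rule DERIV_imp_deriv, auto intro!: derivative_eq_intros deriv_has dg assms simp: power2_eq_square)
  moreover have "Cu N (\<lambda>t. inverse (g t))" using Suc Cu_mono by auto
  moreover have "Cu N (deriv g)" using Suc.prems Cu_Suc by auto
  ultimately have "Cu N (\<lambda>t. (-1) * (deriv g t * (inverse (g t) * inverse (g t))))"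
    using Cu_mult Cu_cmult by blast
  then have "Cu N (deriv (\<lambda>t. inverse (g t)))" using \<open>deriv _ = _\<close> by simp
  then show ?case using Cu_Suc d1 by auto
qed

lemma Cinf_const: "Cinf (\<lambda>t. c)" by (simp add: Cinf_def Cu_const)
lemma Cinf_add: "Cinf f \<Longrightarrow> Cinf g \<Longrightarrow> Cinf (\<lambda>t. f t + g t)" by (simp add: Cinf_def Cu_add)
lemma Cinf_mult: "Cinf f \<Longrightarrow> Cinf g \<Longrightarrow> Cinf (\<lambda>t. f t * g t)" by (simp add: Cinf_def Cu_mult)
lemma Cinf_compose: "Cinf f \<Longrightarrow> Cinf g \<Longrightarrow> Cinf (\<lambda>t. f (g t))" by (simp add: Cinf_def Cu_compose)
lemma Cinf_inverse: "Cinf g \<Longrightarrow> (\<And>t. g t \<noteq> 0) \<Longrightarrow> Cinf (\<lambda>t. inverse (g t))"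
  by (simp add: Cinf_def Cu_inverse)
lemma Cinf_id: "Cinf (\<lambda>t. t)"
proof -
  have "Cu N (\<lambda>t. t)" for N
  proof (cases N)
    case 0 then show ?thesis by (simp add: Cu_0)
  next
    case (Suc M)
    have "deriv (\<lambda>t. t) = (\<lambda>t. 1::real)" by (rule ext, rule DERIV_imp_deriv, auto intro!: derivative_eq_intros)
    then show ?thesis using Suc Cu_Suc Cu_const by simp
  qed
  then show ?thesis by (simp add: Cinf_def)
qed
lemma Cinf_deriv: "Cinf h \<Longrightarrow> Cinf (deriv h)"
  by (simp add: Cinf_def) (metis Cu_Suc)
lemma Cinf_diff: "Cinf h \<Longrightarrow> h differentiable at t"
  by (simp add: Cinf_def Cu_diff)
lemma Cinf_has: "Cinf h \<Longrightarrow> (h has_real_derivative deriv h t) (at t)"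
  by (simp add: Cinf_diff deriv_has)


definition fb :: "real poly \<Rightarrow> real \<Rightarrow> real" where
  "fb P t = (if t > 0 then poly P (1/t) * exp (-1/t) else 0)"

definition fbQ :: "real poly \<Rightarrow> real poly" where
  "fbQ P = [:0,0,1:] * (P - pderiv P)"

lemma poly_exp_lim: "((\<lambda>h. poly Q (1/h) * exp (-1/h)) \<longlongrightarrow> 0) (at_right (0::real))"
proof -
  have "((\<lambda>y. \<Sum>i\<le>degree Q. coeff Q i * (y ^ i / exp y)) \<longlongrightarrow> (\<Sum>i\<le>degree Q. coeff Q i * 0)) at_top"
    by (intro tendsto_sum tendsto_mult tendsto_const tendsto_power_div_exp_0)
  moreover have "(\<lambda>y. poly Q y * exp (- y)) = (\<lambda>y. \<Sum>i\<le>degree Q. coeff Q i * (y ^ i / exp y))"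
    by (auto simp: poly_altdef sum_distrib_right exp_minus divide_inverse mult.assoc)
  ultimately have "((\<lambda>y. poly Q y * exp (- y)) \<longlongrightarrow> 0) at_top"
    by simp
  from filterlim_compose[OF this filterlim_inverse_at_top_right]
  show ?thesis by (simp add: inverse_eq_divide)
qed

lemma fb_deriv: "(fb P has_real_derivative fb (fbQ P) t) (at t)"
proof -
  consider "t > 0" | "t < 0" | "t = 0" by linarith
  then show ?thesis
  proof cases
    case 1
    have "((\<lambda>s. poly P (1/s) * exp (-1/s)) has_real_derivative
        (poly (pderiv P) (1/t) * (-1/t^2)) * exp (-1/t) + poly P (1/t) * (exp (-1/t) * (1/t^2))) (at t)"
      using 1
      by (auto intro!: derivative_eq_intros DERIV_chain2[OF poly_DERIV] simp: power2_eq_square)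
    moreover have "(poly (pderiv P) (1/t) * (-1/t^2)) * exp (-1/t) + poly P (1/t) * (exp (-1/t) * (1/t^2))
        = fb (fbQ P) t"
      using 1 by (simp add: fb_def fbQ_def algebra_simps power2_eq_square)
    ultimately have "((\<lambda>s. poly P (1/s) * exp (-1/s)) has_real_derivative fb (fbQ P) t) (at t)" by simp
    then show ?thesis
      by (rule has_field_derivative_transform_within_open[where S="{0<..}"]) (use 1 in \<open>auto simp: fb_def\<close>)
  next
    case 2
    have "((\<lambda>s. 0) has_real_derivative fb (fbQ P) t) (at t)"
      using 2 by (simp add: fb_def)
    then show ?thesis
      by (rule has_field_derivative_transform_within_open[where S="{..<0}"]) (use 2 in \<open>auto simp: fb_def\<close>)
  next
    case 3
    have r: "((\<lambda>h. (fb P (0 + h) - fb P 0) / h) \<longlongrightarrow> 0) (at_right 0)"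
    proof -
      have "((\<lambda>h. poly (pCons 0 P) (1/h) * exp (-1/h)) \<longlongrightarrow> 0) (at_right (0::real))"
        by (rule poly_exp_lim)
      moreover have "eventually (\<lambda>h. poly (pCons 0 P) (1/h) * exp (-1/h) = (fb P (0 + h) - fb P 0) / h) (at_right 0)"
        by (auto simp: eventually_at_right_field fb_def intro!: exI[of _ 1])
      ultimately show ?thesis by (rule Lim_transform_eventually)
    qed
    have l: "((\<lambda>h. (fb P (0 + h) - fb P 0) / h) \<longlongrightarrow> 0) (at_left 0)"
    proof -
      have "eventually (\<lambda>h. 0 = (fb P (0 + h) - fb P 0) / h) (at_left (0::real))"
        by (auto simp: eventually_at_left_field fb_def intro!: exI[of _ "-1"])
      then show ?thesis by (rule Lim_transform_eventually[OF tendsto_const])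
    qed
    have "fb (fbQ P) 0 = 0" by (simp add: fb_def)
    then show ?thesis using 3 l r by (simp add: DERIV_def filterlim_at_split)
  qed
qed

lemma deriv_fb: "deriv (fb P) = fb (fbQ P)"
  by (rule ext, rule DERIV_imp_deriv, rule fb_deriv)

lemma Cinf_fb: "Cinf (fb P)"
proof -
  have "Cu N (fb P)" for N
  proof (induction N arbitrary: P)
    case 0 then show ?case using fb_deriv by (auto simp: Cu_0 real_differentiable_def)
  next
    case (Suc N) then show ?case using fb_deriv by (auto simp: Cu_Suc deriv_fb real_differentiable_def)
  qed
  then show ?thesis by (simp add: Cinf_def)
qed

lemma fb1_pos: "t > 0 \<Longrightarrow> fb 1 t > 0" by (simp add: fb_def)
lemma fb1_zero: "t \<le> 0 \<Longrightarrow> fb 1 t = 0" by (simp add: fb_def)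
lemma fb1_nonneg: "fb 1 t \<ge> 0" by (simp add: fb_def)

definition cutoff :: "real \<Rightarrow> real \<Rightarrow> real" where
  "cutoff c s = fb 1 (1 - s) / (fb 1 (1 - s) + fb 1 (s - c))"

lemma cutoff_den: "c < 1 \<Longrightarrow> fb 1 (1 - s) + fb 1 (s - c) > 0"
  using fb1_pos[of "1-s"] fb1_pos[of "s-c"] fb1_nonneg[of "1-s"] fb1_nonneg[of "s-c"]
  by (cases "s < 1") auto

lemma Cinf_cutoff: assumes "c < 1" shows "Cinf (cutoff c)"
proof -
  have a: "Cinf (\<lambda>s. fb 1 (1 + (-1) * s))"
    by (rule Cinf_compose[OF Cinf_fb]) (intro Cinf_add Cinf_const Cinf_mult Cinf_id)
  have b: "Cinf (\<lambda>s. fb 1 (s + (-c)))"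
    by (rule Cinf_compose[OF Cinf_fb]) (intro Cinf_add Cinf_const Cinf_mult Cinf_id)
  have "Cinf (\<lambda>s. fb 1 (1 + (-1) * s) * inverse (fb 1 (1 + (-1) * s) + fb 1 (s + (-c))))"
    using cutoff_den[OF assms]
    by (intro Cinf_mult a Cinf_inverse Cinf_add b) (auto simp: less_le)
  then show ?thesis by (simp add: cutoff_def[abs_def] divide_inverse)
qed

lemma cutoff_bounds: "c < 1 \<Longrightarrow> 0 \<le> cutoff c s \<and> cutoff c s \<le> 1"
  using cutoff_den[of c s] fb1_nonneg[of "1-s"] fb1_nonneg[of "s-c"]
  by (auto simp: cutoff_def divide_le_eq_1)

lemma cutoff_one: "c < 1 \<Longrightarrow> s \<le> c \<Longrightarrow> cutoff c s = 1"
  using fb1_pos[of "1-s"] fb1_zero[of "s-c"] by (simp add: cutoff_def)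

lemma cutoff_zero: "c < 1 \<Longrightarrow> 1 \<le> s \<Longrightarrow> cutoff c s = 0"
  using fb1_zero[of "1-s"] by (simp add: cutoff_def)

lemma deriv_power_rep:
  assumes "Cinf g"
  shows "j \<le> k \<Longrightarrow> \<exists>c. Cinf c \<and> (deriv ^^ j) (\<lambda>s. g s ^ k) = (\<lambda>s. g s ^ (k - j) * c s)"
proof (induction j)
  case 0
  then show ?case by (intro exI[of _ "\<lambda>_. 1"]) (simp add: Cinf_const)
next
  case (Suc j)
  then obtain c where c: "Cinf c" "(deriv ^^ j) (\<lambda>s. g s ^ k) = (\<lambda>s. g s ^ (k - j) * c s)" by auto
  obtain p where p: "k - j = Suc p" using Suc.prems by (intro that[of "k - j - 1"]) simp
  have kp: "k - Suc j = p" using p by simp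
  have "deriv (\<lambda>s. g s ^ Suc p * c s) = (\<lambda>s. g s ^ p * (real (Suc p) * deriv g s * c s + g s * deriv c s))"
  proof (rule ext, rule DERIV_imp_deriv)
    fix s
    have "((\<lambda>s. g s ^ Suc p * c s) has_real_derivative
       g s ^ Suc p * deriv c s + ((1 + of_nat p) * (deriv g s * g s ^ p)) * c s) (at s)"
      by (intro DERIV_mult' DERIV_power_Suc Cinf_has assms c)
    then show "((\<lambda>s. g s ^ Suc p * c s) has_real_derivative
        g s ^ p * (real (Suc p) * deriv g s * c s + g s * deriv c s)) (at s)"
      by (simp add: algebra_simps)
  qed
  moreover have "Cinf (\<lambda>s. real (Suc p) * deriv g s * c s + g s * deriv c s)"
    by (intro Cinf_add Cinf_mult Cinf_const Cinf_deriv assms c)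
  ultimately show ?case using c p kp by (auto simp del: of_nat_Suc)
qed


definition pdd :: "(real^'n::finite \<Rightarrow> real) \<Rightarrow> 'n \<Rightarrow> real^'n \<Rightarrow> bool" where
  "pdd f i x \<longleftrightarrow> (\<lambda>t. f (x + t *\<^sub>R axis i 1)) differentiable at 0"

lemma pdd_has: "pdd f i x \<Longrightarrow> ((\<lambda>t. f (x + t *\<^sub>R axis i 1)) has_real_derivative pdiff i f x) (at 0)"
  by (simp add: pdd_def pdiff_def DERIV_deriv_iff_real_differentiable)

lemma pdiff_eqI: "((\<lambda>t. f (x + t *\<^sub>R axis i 1)) has_real_derivative D) (at 0) \<Longrightarrow> pdiff i f x = D"
  by (simp add: pdiff_def DERIV_imp_deriv)

lemma pddI: "((\<lambda>t. f (x + t *\<^sub>R axis i 1)) has_real_derivative D) (at 0) \<Longrightarrow> pdd f i x"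
  by (auto simp: pdd_def real_differentiable_def)

lemma pd_add:
  assumes "pdd f i x" "pdd g i x"
  shows "pdd (\<lambda>x. f x + g x) i x" "pdiff i (\<lambda>x. f x + g x) x = pdiff i f x + pdiff i g x"
proof -
  have "((\<lambda>t. f (x + t *\<^sub>R axis i 1) + g (x + t *\<^sub>R axis i 1)) has_real_derivative pdiff i f x + pdiff i g x) (at 0)"
    by (intro DERIV_add pdd_has assms)
  then show "pdd (\<lambda>x. f x + g x) i x" "pdiff i (\<lambda>x. f x + g x) x = pdiff i f x + pdiff i g x"
    by (auto intro: pddI pdiff_eqI)
qed

lemma pd_mult:
  assumes "pdd f i x" "pdd g i x"
  shows "pdd (\<lambda>x. f x * g x) i x" "pdiff i (\<lambda>x. f x * g x) x = pdiff i f x * g x + f x * pdiff i g x"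
proof -
  have "((\<lambda>t. f (x + t *\<^sub>R axis i 1) * g (x + t *\<^sub>R axis i 1)) has_real_derivative
      f (x + 0 *\<^sub>R axis i 1) * pdiff i g x + pdiff i f x * g (x + 0 *\<^sub>R axis i 1)) (at 0)"
    by (intro DERIV_mult' pdd_has assms)
  then show "pdd (\<lambda>x. f x * g x) i x" "pdiff i (\<lambda>x. f x * g x) x = pdiff i f x * g x + f x * pdiff i g x"
    by (auto intro: pddI pdiff_eqI simp: algebra_simps)
qed

lemma pd_const: "pdd (\<lambda>x. c) i x" "pdiff i (\<lambda>x. c) x = 0"
proof -
  show "pdd (\<lambda>x. c) i x" by (simp add: pdd_def)
  show "pdiff i (\<lambda>x. c) x = 0" by (rule pdiff_eqI) simp
qed

lemma pd_coord: "pdd (\<lambda>x. x $ j) i x" "pdiff i (\<lambda>x. x $ j) x = (if j = i then 1 else 0)"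
proof -
  have "((\<lambda>t. (x + t *\<^sub>R axis i 1) $ j) has_real_derivative (if j = i then 1 else 0)) (at 0)"
    by (auto simp: axis_def intro!: derivative_eq_intros)
  then show "pdd (\<lambda>x. x $ j) i x" "pdiff i (\<lambda>x. x $ j) x = (if j = i then 1 else 0)"
    by (auto intro: pddI pdiff_eqI)
qed

inductive_set Pol :: "(real^'n::finite \<Rightarrow> real) set" where
  Pconst: "(\<lambda>x. c) \<in> Pol"
| Pcoord: "(\<lambda>x. x $ j) \<in> Pol"
| Padd: "f \<in> Pol \<Longrightarrow> g \<in> Pol \<Longrightarrow> (\<lambda>x. f x + g x) \<in> Pol"
| Pmult: "f \<in> Pol \<Longrightarrow> g \<in> Pol \<Longrightarrow> (\<lambda>x. f x * g x) \<in> Pol"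

lemma Pol_props:
  "f \<in> Pol \<Longrightarrow> continuous_on UNIV f \<and> (\<forall>i x. pdd f i x) \<and> (\<forall>i. pdiff i f \<in> Pol)"
proof (induction rule: Pol.induct)
  case (Pconst c)
  have "pdiff i (\<lambda>x. c) = (\<lambda>x. 0)" for i by (rule ext) (simp add: pd_const)
  then show ?case by (auto simp: pd_const intro: Pol.Pconst)
next
  case (Pcoord j)
  have "pdiff i (\<lambda>x::real^'a. x $ j) = (\<lambda>x. if j = i then 1 else 0)" for i by (rule ext) (simp add: pd_coord)
  then show ?case by (auto simp: pd_coord intro!: Pol.Pconst continuous_intros)
next
  case (Padd f g)
  have "pdiff i (\<lambda>x. f x + g x) = (\<lambda>x. pdiff i f x + pdiff i g x)" for i
    by (rule ext) (use Padd in \<open>simp add: pd_add\<close>)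
  then show ?case using Padd by (auto simp: pd_add intro!: Pol.Padd continuous_intros)
next
  case (Pmult f g)
  have "pdiff i (\<lambda>x. f x * g x) = (\<lambda>x. pdiff i f x * g x + f x * pdiff i g x)" for i
    by (rule ext) (use Pmult in \<open>simp add: pd_mult\<close>)
  then show ?case using Pmult by (auto simp: pd_mult intro!: Pol.Padd Pol.Pmult continuous_intros)
qed

lemma pdiffs_append: "pdiffs (xs @ ys) f = pdiffs xs (pdiffs ys f)"
  by (induction xs) auto

definition Fsq :: "real^'n::finite \<Rightarrow> real" where "Fsq x = x \<bullet> x"

lemma Fsq_line: "Fsq (x + t *\<^sub>R axis i 1) = Fsq x + 2 * t * x $ i + t^2"
  by (simp add: Fsq_def inner_add_left inner_add_right inner_axis inner_axis' inner_axis_axis power2_eq_square algebra_simps)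

lemma Fsq_has: "((\<lambda>t. Fsq (x + t *\<^sub>R axis i 1)) has_real_derivative 2 * x $ i) (at 0)"
  unfolding Fsq_line by (auto intro!: derivative_eq_intros)

lemma Fsq_cont: "continuous_on UNIV Fsq"
  unfolding Fsq_def by (intro continuous_intros)

lemma pd_comp:
  assumes "Cinf h" "pdd c i x"
  shows "pdd (\<lambda>x. h (Fsq x) * c x) i x"
    "pdiff i (\<lambda>x. h (Fsq x) * c x) x = deriv h (Fsq x) * (2 * x $ i * c x) + h (Fsq x) * pdiff i c x"
proof -
  have "((\<lambda>t. h (Fsq (x + t *\<^sub>R axis i 1))) has_real_derivative deriv h (Fsq (x + 0 *\<^sub>R axis i 1)) * (2 * x $ i)) (at 0)"
    by (rule DERIV_chain2[OF Cinf_has[OF assms(1)] Fsq_has])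
  then have "((\<lambda>t. h (Fsq (x + t *\<^sub>R axis i 1)) * c (x + t *\<^sub>R axis i 1)) has_real_derivative
      h (Fsq (x + 0 *\<^sub>R axis i 1)) * pdiff i c x + deriv h (Fsq (x + 0 *\<^sub>R axis i 1)) * (2 * x $ i) * c (x + 0 *\<^sub>R axis i 1)) (at 0)"
    by (intro DERIV_mult' pdd_has assms)
  then show "pdd (\<lambda>x. h (Fsq x) * c x) i x"
    "pdiff i (\<lambda>x. h (Fsq x) * c x) x = deriv h (Fsq x) * (2 * x $ i * c x) + h (Fsq x) * pdiff i c x"
    by (auto intro: pddI pdiff_eqI simp: algebra_simps)
qed

definition rsum :: "(real \<Rightarrow> real) \<Rightarrow> (nat \<times> (real^'n::finite \<Rightarrow> real)) list \<Rightarrow> real^'n \<Rightarrow> real" where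
  "rsum h cs x = (\<Sum>(j, c)\<leftarrow>cs. (deriv ^^ j) h (Fsq x) * c x)"

lemma Cinf_funpow: "Cinf h \<Longrightarrow> Cinf ((deriv ^^ j) h)"
  by (induction j) (auto intro: Cinf_deriv)

lemma rsum_step:
  assumes "Cinf h" "\<forall>(j, c)\<in>set cs. c \<in> Pol"
  shows "pdd (rsum h cs) i x \<and>
    pdiff i (rsum h cs) x = rsum h (concat (map (\<lambda>(j, c). [(Suc j, \<lambda>x. 2 * x $ i * c x), (j, pdiff i c)]) cs)) x"
  using assms(2)
proof (induction cs)
  case Nil
  then show ?case by (simp add: rsum_def pd_const)
next
  case (Cons jc cs)
  obtain j c where jc: "jc = (j, c)" by fastforce
  have cP: "c \<in> Pol" using Cons.prems jc by auto
  have e: "rsum h (jc # cs) = (\<lambda>x. (deriv ^^ j) h (Fsq x) * c x + rsum h cs x)"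
    by (rule ext) (simp add: rsum_def jc)
  have IH: "pdd (rsum h cs) i x"
    "pdiff i (rsum h cs) x = rsum h (concat (map (\<lambda>(j, c). [(Suc j, \<lambda>x. 2 * x $ i * c x), (j, pdiff i c)]) cs)) x"
    using Cons by auto
  have T: "pdd (\<lambda>x. (deriv ^^ j) h (Fsq x) * c x) i x"
    "pdiff i (\<lambda>x. (deriv ^^ j) h (Fsq x) * c x) x = deriv ((deriv ^^ j) h) (Fsq x) * (2 * x $ i * c x) + (deriv ^^ j) h (Fsq x) * pdiff i c x"
    using pd_comp[OF Cinf_funpow[OF assms(1)], of c i x j] Pol_props[OF cP] by auto
  show ?case unfolding e using pd_add[OF T(1) IH(1)] T(2) IH(2)
    by (simp add: rsum_def jc)
qed

lemma rep:
  assumes "Cinf h"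
  shows "\<exists>cs. (\<forall>(j, c)\<in>set cs. j \<le> length is \<and> c \<in> Pol) \<and> pdiffs is (\<lambda>x. h (Fsq x)) = rsum h cs"
proof (induction "is")
  case Nil
  have "(\<lambda>x. h (Fsq x)) = rsum h [(0, \<lambda>x. 1)]" by (rule ext) (simp add: rsum_def)
  then show ?case by (intro exI[of _ "[(0, \<lambda>x. 1)]"]) (auto intro: Pol.Pconst)
next
  case (Cons i "is")
  then obtain cs where cs: "\<forall>(j, c)\<in>set cs. j \<le> length is \<and> c \<in> Pol" "pdiffs is (\<lambda>x. h (Fsq x)) = rsum h cs"
    by auto
  define cs' where "cs' = concat (map (\<lambda>(j, c). [(Suc j, \<lambda>x. 2 * x $ i * c x), (j, pdiff i c)]) cs)"
  have "pdiffs (i # is) (\<lambda>x. h (Fsq x)) = rsum h cs'"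
  proof (rule ext)
    fix x
    have "\<forall>(j, c)\<in>set cs. c \<in> Pol" using cs(1) by auto
    then show "pdiffs (i # is) (\<lambda>x. h (Fsq x)) x = rsum h cs' x"
      using rsum_step[OF assms, of cs i x] cs(2) by (simp add: cs'_def)
  qed
  moreover have "\<forall>(j, c)\<in>set cs'. j \<le> length (i # is) \<and> c \<in> Pol"
    using cs(1) Pol_props by (fastforce simp: cs'_def intro!: Pol.Pmult Pol.Pconst Pol.Pcoord)
  ultimately show ?case by blast
qed

lemma rsum_cont:
  assumes "Cinf h" "\<forall>(j, c)\<in>set cs. c \<in> Pol"
  shows "continuous_on UNIV (rsum h cs)"
  using assms(2)
proof (induction cs)
  case Nil then show ?case by (simp add: rsum_def[abs_def])
next
  case (Cons jc cs)
  obtain j c where jc: "jc = (j, c)" by fastforce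
  have cP: "continuous_on UNIV c" using Cons.prems jc Pol_props by auto
  have hc: "continuous_on UNIV ((deriv ^^ j) h)"
    using Cinf_diff[OF Cinf_funpow[OF assms(1)]] by (intro continuous_at_imp_continuous_on) (auto intro: differentiable_imp_continuous_within)
  have e: "rsum h (jc # cs) = (\<lambda>x. (deriv ^^ j) h (Fsq x) * c x + rsum h cs x)"
    by (rule ext) (simp add: rsum_def jc)
  show ?case unfolding e using Cons cP
    by (auto intro!: continuous_intros continuous_on_compose2[OF hc Fsq_cont])
qed

lemma smooth_comp: assumes "Cinf h" shows "smooth_fun (\<lambda>x. h (Fsq x))"
  unfolding smooth_fun_def
proof (intro allI conjI)
  fix "is" :: "'a list"
  obtain cs where cs: "\<forall>(j, c)\<in>set cs. j \<le> length is \<and> c \<in> Pol" "pdiffs is (\<lambda>x. h (Fsq x)) = rsum h cs"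
    using rep[OF assms] by blast
  have cs': "\<forall>(j, c)\<in>set cs. c \<in> Pol" using cs(1) by auto
  show "continuous_on UNIV (pdiffs is (\<lambda>x. h (Fsq x)))" using rsum_cont[OF assms cs'] cs(2) by simp
  fix i x
  show "(\<lambda>t. pdiffs is (\<lambda>x. h (Fsq x)) (x + t *\<^sub>R axis i 1)) differentiable at 0"
    using rsum_step[OF assms cs', of i x] cs(2) by (simp add: pdd_def)
qed


lemma Cinf_power: "Cinf g \<Longrightarrow> Cinf (\<lambda>s. g s ^ k)"
  by (induction k) (auto intro: Cinf_const Cinf_mult)

definition tf :: "real \<Rightarrow> nat \<Rightarrow> real \<Rightarrow> real^'n::finite \<Rightarrow> real" where
  "tf c k r x = cutoff c (Fsq x / r^2) ^ k"

lemma smooth_tf: assumes "c < 1" shows "smooth_fun (tf c k r)"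
proof -
  have "Cinf (\<lambda>s. cutoff c (s * inverse (r^2)) ^ k)"
    by (intro Cinf_power Cinf_compose[OF Cinf_cutoff[OF assms]] Cinf_mult Cinf_id Cinf_const)
  from smooth_comp[OF this] show ?thesis
    by (simp add: tf_def[abs_def] divide_inverse)
qed

lemma smooth_pdd: "smooth_fun f \<Longrightarrow> pdd (pdiffs is f) i x"
  by (simp add: smooth_fun_def pdd_def)

lemma scaling:
  assumes "smooth_fun f"
  shows "pdiffs is (\<lambda>x. f (s *\<^sub>R x)) = (\<lambda>x. s ^ length is * pdiffs is f (s *\<^sub>R x))"
proof (induction "is")
  case Nil then show ?case by simp
next
  case (Cons i "is")
  show ?case
  proof (rule ext)
    fix x
    let ?g = "pdiffs is f"
    have "((\<lambda>u. ?g (s *\<^sub>R x + u *\<^sub>R axis i 1)) has_real_derivative pdiff i ?g (s *\<^sub>R x)) (at (s * 0))"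
      using pdd_has[OF smooth_pdd[OF assms]] by simp
    from DERIV_chain2[OF this DERIV_cmult_Id[of s 0]]
    have "((\<lambda>t. ?g (s *\<^sub>R x + (s * t) *\<^sub>R axis i 1)) has_real_derivative pdiff i ?g (s *\<^sub>R x) * s) (at 0)"
      by simp
    then have "((\<lambda>t. s ^ length is * ?g (s *\<^sub>R (x + t *\<^sub>R axis i 1))) has_real_derivative
        s ^ length is * (pdiff i ?g (s *\<^sub>R x) * s)) (at 0)"
      by (intro DERIV_cmult) (simp add: scaleR_add_right)
    then have "pdiff i (\<lambda>x. s ^ length is * ?g (s *\<^sub>R x)) x = s ^ length is * (pdiff i ?g (s *\<^sub>R x) * s)"
      by (rule pdiff_eqI)
    then show "pdiffs (i # is) (\<lambda>x. f (s *\<^sub>R x)) x = s ^ length (i # is) * pdiffs (i # is) f (s *\<^sub>R x)"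
      using Cons by (simp add: algebra_simps)
  qed
qed

lemma loc_const:
  assumes "open U" "\<And>x. x \<in> U \<Longrightarrow> f x = K"
  shows "x \<in> U \<Longrightarrow> pdiffs is f x = (if is = [] then K else 0)"
proof (induction "is" arbitrary: x)
  case Nil then show ?case using assms by simp
next
  case (Cons i "is")
  let ?g = "pdiffs is f"
  define v where "v = (if is = [] then K else 0)"
  let ?S = "(\<lambda>t. x + t *\<^sub>R axis i 1) -` U"
  have "open ?S"
    by (rule continuous_open_vimage[OF assms(1)]) (intro continuous_intros)
  have "((\<lambda>t. v) has_real_derivative 0) (at 0)" by simp
  then have "((\<lambda>t. ?g (x + t *\<^sub>R axis i 1)) has_real_derivative 0) (at 0)"
    by (rule has_field_derivative_transform_within_open[OF _ \<open>open ?S\<close>]) (use Cons in \<open>auto simp: v_def\<close>)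
  then show ?case by (simp add: pdiff_eqI)
qed

lemma Fsq_norm: "Fsq x = norm x ^ 2"
  by (simp add: Fsq_def power2_norm_eq_inner)

lemma Fsq_nonneg: "Fsq x \<ge> 0" by (simp add: Fsq_norm)

lemma cont_bound_interval:
  assumes "continuous_on UNIV (d :: real \<Rightarrow> real)"
  shows "\<exists>D\<ge>0. \<forall>s\<in>{0..1}. \<bar>d s\<bar> \<le> D"
proof -
  have "compact (d ` {0..1})"
    by (rule compact_continuous_image[OF continuous_on_subset[OF assms]]) auto
  then have "bounded (d ` {0..1})" by (rule compact_imp_bounded)
  then obtain a where "\<forall>y\<in>d ` {0..1}. norm y \<le> a" unfolding bounded_iff by blast
  then show ?thesis by (intro exI[of _ "max a 0"]) auto
qed

lemma cont_bound_ball: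
  assumes "continuous_on UNIV (d :: real^'n::finite \<Rightarrow> real)"
  shows "\<exists>D\<ge>0. \<forall>y. Fsq y \<le> 1 \<longrightarrow> \<bar>d y\<bar> \<le> D"
proof -
  have "compact (d ` cball 0 1)"
    by (rule compact_continuous_image[OF continuous_on_subset[OF assms]]) auto
  then have "bounded (d ` cball 0 1)" by (rule compact_imp_bounded)
  then obtain a where a: "\<forall>y\<in>d ` cball 0 1. norm y \<le> a" unfolding bounded_iff by blast
  have yb: "y \<in> cball 0 1" if "Fsq y \<le> 1" for y :: "real^'n"
  proof -
    have "norm y ^ 2 \<le> 1 ^ 2" using that by (simp add: Fsq_norm)
    then have "norm y \<le> 1" by (rule power2_le_imp_le) simp
    then show ?thesis by simp
  qed
  have "\<bar>d y\<bar> \<le> a" if "Fsq y \<le> 1" for y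
  proof -
    have "d y \<in> d ` cball 0 1" using yb[OF that] by blast
    then show ?thesis using a by fastforce
  qed
  then show ?thesis by (intro exI[of _ "max a 0"]) (auto intro: order_trans[OF _ max.cobounded1])
qed

lemma Cinf_cont: "Cinf h \<Longrightarrow> continuous_on UNIV h"
  using Cinf_diff by (intro continuous_at_imp_continuous_on) (auto intro: differentiable_imp_continuous_within)

lemma rsum_bound:
  assumes c1: "c < 1" and mk: "m \<le> k"
  shows "\<forall>(j, d)\<in>set cs. j \<le> m \<and> d \<in> Pol \<Longrightarrow>
    \<exists>C\<ge>0. \<forall>y. Fsq y \<le> 1 \<longrightarrow> \<bar>rsum (\<lambda>s. cutoff c s ^ k) cs y\<bar> \<le> C * cutoff c (Fsq y) ^ (k - m)"
proof (induction cs)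
  case Nil then show ?case by (auto simp: rsum_def)
next
  case (Cons jd cs)
  obtain j d where jd: "jd = (j, d)" by fastforce
  have jm: "j \<le> m" and dP: "d \<in> Pol" using Cons.prems jd by auto
  obtain C where C: "C \<ge> 0" "\<forall>y. Fsq y \<le> 1 \<longrightarrow> \<bar>rsum (\<lambda>s. cutoff c s ^ k) cs y\<bar> \<le> C * cutoff c (Fsq y) ^ (k - m)"
    using Cons by auto
  obtain e where e: "Cinf e" "(deriv ^^ j) (\<lambda>s. cutoff c s ^ k) = (\<lambda>s. cutoff c s ^ (k - j) * e s)"
    using deriv_power_rep[OF Cinf_cutoff[OF c1], of j k] jm mk by auto
  obtain D1 where D1: "D1 \<ge> 0" "\<forall>s\<in>{0..1}. \<bar>e s\<bar> \<le> D1" using cont_bound_interval[OF Cinf_cont[OF e(1)]] by auto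
  obtain D2 where D2: "D2 \<ge> 0" "\<forall>y. Fsq y \<le> 1 \<longrightarrow> \<bar>d y\<bar> \<le> D2" using cont_bound_ball Pol_props[OF dP] by blast
  show ?case
  proof (intro exI[of _ "C + D1 * D2"] conjI allI impI)
    show "0 \<le> C + D1 * D2" using C D1 D2 by simp
    fix y :: "real^'a" assume y: "Fsq y \<le> 1"
    let ?p = "cutoff c (Fsq y)"
    have p01: "0 \<le> ?p" "?p \<le> 1" using cutoff_bounds[OF c1] by auto
    have "?p ^ (k - j) \<le> ?p ^ (k - m)" using p01 jm by (intro power_decreasing) auto
    have "\<bar>(deriv ^^ j) (\<lambda>s. cutoff c s ^ k) (Fsq y) * d y\<bar> = ?p ^ (k - j) * \<bar>e (Fsq y)\<bar> * \<bar>d y\<bar>"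
      using e(2) p01 by (simp add: abs_mult)
    also have "\<dots> \<le> ?p ^ (k - m) * D1 * D2"
      using D1 D2 y Fsq_nonneg[of y] \<open>?p ^ (k - j) \<le> ?p ^ (k - m)\<close> p01
      by (intro mult_mono) auto
    finally have t: "\<bar>(deriv ^^ j) (\<lambda>s. cutoff c s ^ k) (Fsq y) * d y\<bar> \<le> ?p ^ (k - m) * D1 * D2" .
    have "rsum (\<lambda>s. cutoff c s ^ k) (jd # cs) y = (deriv ^^ j) (\<lambda>s. cutoff c s ^ k) (Fsq y) * d y + rsum (\<lambda>s. cutoff c s ^ k) cs y"
      by (simp add: rsum_def jd)
    then show "\<bar>rsum (\<lambda>s. cutoff c s ^ k) (jd # cs) y\<bar> \<le> (C + D1 * D2) * ?p ^ (k - m)"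
      using t C y by (auto simp: algebra_simps)
  qed
qed

lemma tf1_bound:
  assumes c1: "c < 1" and mk: "m \<le> k" and "0 < k" and len: "length is \<le> m"
  shows "\<exists>C\<ge>0. \<forall>y. \<bar>pdiffs is (tf c k 1) y\<bar> \<le> C * cutoff c (Fsq y) ^ (k - m)"
proof -
  have tf1: "tf c k 1 = (\<lambda>x. (\<lambda>s. cutoff c s ^ k) (Fsq x))" by (rule ext) (simp add: tf_def)
  obtain cs where cs: "\<forall>(j, c)\<in>set cs. j \<le> length is \<and> c \<in> Pol"
      "pdiffs is (\<lambda>x. (\<lambda>s. cutoff c s ^ k) (Fsq x)) = rsum (\<lambda>s. cutoff c s ^ k) cs"
    using rep[OF Cinf_power[OF Cinf_cutoff[OF c1]]] by blast
  have "\<forall>(j, d)\<in>set cs. j \<le> m \<and> d \<in> Pol" using cs(1) len by auto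
  from rsum_bound[OF c1 mk this] obtain C where C: "C \<ge> 0"
    "\<forall>y. Fsq y \<le> 1 \<longrightarrow> \<bar>rsum (\<lambda>s. cutoff c s ^ k) cs y\<bar> \<le> C * cutoff c (Fsq y) ^ (k - m)" by auto
  have z: "pdiffs is (tf c k 1) y = 0" if "Fsq y > 1" for y
  proof -
    have "pdiffs is (tf c k 1) y = (if is = [] then 0 else 0)"
      by (rule loc_const[where U="{y. Fsq y > 1}"])
         (use that \<open>0 < k\<close> cutoff_zero[OF c1] in \<open>auto simp: tf_def intro!: open_Collect_less continuous_on_const Fsq_cont\<close>)
    then show ?thesis by simp
  qed
  have pe: "pdiffs is (tf c k 1) = rsum (\<lambda>s. cutoff c s ^ k) cs" unfolding tf1 by (rule cs(2))
  show ?thesis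
  proof (intro exI[of _ C] conjI allI)
    fix y :: "real^'a"
    have "0 \<le> C * cutoff c (Fsq y) ^ (k - m)" using C cutoff_bounds[OF c1] by auto
    then show "\<bar>pdiffs is (tf c k 1) y\<bar> \<le> C * cutoff c (Fsq y) ^ (k - m)"
      using C z[of y] pe by (cases "Fsq y \<le> 1") auto
  qed (use C in auto)
qed

lemma tf_scale: "r > 0 \<Longrightarrow> tf c k r x = tf c k 1 ((1/r) *\<^sub>R x)"
  by (simp add: tf_def Fsq_def power2_eq_square)

lemma tf_bound:
  assumes c1: "c < 1" and mk: "m \<le> k" and "0 < k" and len: "length is = m"
  shows "\<exists>C\<ge>0. \<forall>r>0. \<forall>x. \<bar>pdiffs is (tf c k r) x\<bar> \<le> C * (1/r) ^ m * cutoff c (Fsq x / r^2) ^ (k - m)"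
proof -
  obtain C where C: "C \<ge> 0" "\<forall>y. \<bar>pdiffs is (tf c k 1) y\<bar> \<le> C * cutoff c (Fsq y) ^ (k - m)"
    using tf1_bound[OF c1 mk \<open>0<k\<close>, of "is"] len by auto
  show ?thesis
  proof (intro exI[of _ C] conjI allI impI)
    fix r :: real and x :: "real^'a" assume r: "r > 0"
    have e: "tf c k r = (\<lambda>x. tf c k 1 ((1/r) *\<^sub>R x))" using tf_scale[OF r] by auto
    have "pdiffs is (tf c k r) x = (1/r) ^ m * pdiffs is (tf c k 1) ((1/r) *\<^sub>R x)"
      unfolding e scaling[OF smooth_tf[OF c1]] len by simp
    moreover have "Fsq ((1/r) *\<^sub>R x) = Fsq x / r^2" by (simp add: Fsq_def power2_eq_square)
    ultimately show "\<bar>pdiffs is (tf c k r) x\<bar> \<le> C * (1/r) ^ m * cutoff c (Fsq x / r^2) ^ (k - m)"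
      using C(2)[rule_format, of "(1/r) *\<^sub>R x"] r by (simp add: abs_mult mult_left_mono algebra_simps)
  qed (use C in auto)
qed


lemma length_count: "length xs = (\<Sum>i\<in>(UNIV::'n::finite set). count_list xs i)"
proof (induction xs)
  case Nil then show ?case by simp
next
  case (Cons x xs)
  have "(\<Sum>i\<in>(UNIV::'n set). count_list (x # xs) i) = (\<Sum>i\<in>UNIV. count_list xs i + (if x = i then 1 else 0))"
    by (intro sum.cong) auto
  also have "\<dots> = (\<Sum>i\<in>UNIV. count_list xs i) + 1"
    by (simp add: sum.distrib)
  finally show ?case using Cons by simp
qed

lemma exists_count: "\<exists>xs. \<forall>i. count_list xs i = (\<alpha> :: 'n::finite \<Rightarrow> nat) i"
proof (induction "mi_order \<alpha>" arbitrary: \<alpha>)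
  case 0
  then have "\<forall>i. \<alpha> i = 0" by (simp add: mi_order_def)
  then show ?case by (intro exI[of _ "[]"]) simp
next
  case (Suc N)
  then obtain j where j: "\<alpha> j > 0"
    by (metis (full_types) gr0I mi_order_def sum.neutral nat.simps(3))
  define \<beta> where "\<beta> = \<alpha>(j := \<alpha> j - 1)"
  have "mi_order \<alpha> = mi_order \<beta> + 1"
  proof -
    have "mi_order \<alpha> = \<alpha> j + (\<Sum>i\<in>UNIV - {j}. \<alpha> i)"
      by (simp add: mi_order_def sum.remove)
    moreover have "mi_order \<beta> = \<beta> j + (\<Sum>i\<in>UNIV - {j}. \<beta> i)"
      by (simp add: mi_order_def sum.remove)
    moreover have "(\<Sum>i\<in>UNIV - {j}. \<beta> i) = (\<Sum>i\<in>UNIV - {j}. \<alpha> i)"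
      by (intro sum.cong) (auto simp: \<beta>_def)
    ultimately show ?thesis using j by (simp add: \<beta>_def)
  qed
  then obtain xs where xs: "\<forall>i. count_list xs i = \<beta> i" using Suc by force
  show ?case using xs j by (intro exI[of _ "j # xs"]) (auto simp: \<beta>_def)
qed

lemma Dalpha_list:
  assumes "mi_order \<alpha> = m"
  shows "length (SOME is. \<forall>i. count_list is i = \<alpha> i) = m"
    "Dalpha \<alpha> f = pdiffs (SOME is. \<forall>i. count_list is i = \<alpha> i) f"
proof -
  have "\<forall>i. count_list (SOME is. \<forall>i. count_list is i = \<alpha> i) i = \<alpha> i"
    using someI_ex[OF exists_count[of \<alpha>]] .
  then show "length (SOME is. \<forall>i. count_list is i = \<alpha> i) = m"
    using assms by (simp add: length_count mi_order_def)
  show "Dalpha \<alpha> f = pdiffs (SOME is. \<forall>i. count_list is i = \<alpha> i) f"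
    by (simp add: Dalpha_def)
qed

lemma holder:
  fixes f g :: "'a \<Rightarrow> real"
  assumes p: "p > 1" and fm: "f \<in> borel_measurable M" and gm: "g \<in> borel_measurable M"
    and f0: "\<And>x. f x \<ge> 0" and g0: "\<And>x. g x \<ge> 0"
    and A: "(\<integral>\<^sup>+ x. ennreal (f x powr p) \<partial>M) = ennreal A" and "A \<ge> 0"
    and B: "(\<integral>\<^sup>+ x. ennreal (g x powr (p/(p-1))) \<partial>M) = ennreal B" and "B \<ge> 0"
  shows "(\<integral>\<^sup>+ x. ennreal (f x * g x) \<partial>M) \<le> ennreal (A powr (1/p) * B powr ((p-1)/p))"
proof -
  define q where "q = p/(p-1)"
  have q: "q > 1" "1/p + 1/q = 1" using p by (auto simp: q_def field_simps)
  consider "A = 0" | "B = 0" | "A > 0" "B > 0" using \<open>A \<ge> 0\<close> \<open>B \<ge> 0\<close> by linarith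
  then show ?thesis
  proof cases
    case 1
    then have "AE x in M. ennreal (f x powr p) = 0"
      using A by (subst nn_integral_0_iff_AE[symmetric]) (auto intro!: measurable_compose[OF fm])
    then have "AE x in M. ennreal (f x * g x) = 0"
      by eventually_elim (use f0 in auto)
    then have "(\<integral>\<^sup>+ x. ennreal (f x * g x) \<partial>M) = 0"
      using nn_integral_cong_AE[of "\<lambda>x. ennreal (f x * g x)" "\<lambda>_. 0" M] by simp
    then show ?thesis by simp
  next
    case 2
    then have "AE x in M. ennreal (g x powr (p/(p-1))) = 0"
      using B by (subst nn_integral_0_iff_AE[symmetric]) (auto intro!: measurable_compose[OF gm])
    then have "AE x in M. ennreal (f x * g x) = 0"
      by eventually_elim (use g0 in auto)
    then have "(\<integral>\<^sup>+ x. ennreal (f x * g x) \<partial>M) = 0"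
      using nn_integral_cong_AE[of "\<lambda>x. ennreal (f x * g x)" "\<lambda>_. 0" M] by simp
    then show ?thesis by simp
  next
    case 3
    define \<alpha> where "\<alpha> = A powr (1/p)"
    define \<beta> where "\<beta> = B powr (1/q)"
    have ab: "\<alpha> > 0" "\<beta> > 0" using 3 by (auto simp: \<alpha>_def \<beta>_def)
    have ap: "\<alpha> powr p = A" using 3 p by (simp add: \<alpha>_def powr_powr)
    have bq: "\<beta> powr q = B" using 3 q by (simp add: \<beta>_def powr_powr)
    have pt: "f x * g x \<le> \<alpha> * \<beta> * ((1/(p*A)) * f x powr p + (1/(q*B)) * g x powr q)" for x
    proof -
      have "(f x / \<alpha>) * (g x / \<beta>) \<le> (f x / \<alpha>) powr p / p + (g x / \<beta>) powr q / q"
        by (rule Youngs_inequality) (use p q ab f0 g0 in auto)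
      also have "\<dots> = (1/(p*A)) * f x powr p + (1/(q*B)) * g x powr q"
        using ap bq by (simp add: powr_divide f0 g0 ab less_imp_le mult.commute)
      finally show ?thesis using ab by (simp add: field_simps)
    qed
    have "(\<integral>\<^sup>+ x. ennreal (f x * g x) \<partial>M)
        \<le> (\<integral>\<^sup>+ x. ennreal (\<alpha> * \<beta> * (1/(p*A))) * ennreal (f x powr p) + ennreal (\<alpha> * \<beta> * (1/(q*B))) * ennreal (g x powr q) \<partial>M)"
      using pt ab 3 p q
      by (intro nn_integral_mono) (auto simp flip: ennreal_plus ennreal_mult intro!: ennreal_leI simp: algebra_simps)
    also have "\<dots> = ennreal (\<alpha> * \<beta> * (1/(p*A))) * ennreal A + ennreal (\<alpha> * \<beta> * (1/(q*B))) * ennreal B"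
    proof -
      have m1: "(\<lambda>x. ennreal (f x powr p)) \<in> borel_measurable M" using fm by measurable
      have m2: "(\<lambda>x. ennreal (g x powr q)) \<in> borel_measurable M" using gm by measurable
      define c1 where "c1 = ennreal (\<alpha> * \<beta> * (1/(p*A)))"
      define c2 where "c2 = ennreal (\<alpha> * \<beta> * (1/(q*B)))"
      have "(\<integral>\<^sup>+ x. c1 * ennreal (f x powr p) + c2 * ennreal (g x powr q) \<partial>M)
          = (\<integral>\<^sup>+ x. c1 * ennreal (f x powr p) \<partial>M) + (\<integral>\<^sup>+ x. c2 * ennreal (g x powr q) \<partial>M)"
        by (rule nn_integral_add) (use m1 m2 in auto)
      also have "\<dots> = c1 * ennreal A + c2 * ennreal B"
        unfolding nn_integral_cmult[OF m1] nn_integral_cmult[OF m2] using A B by (simp add: q_def)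
      finally show ?thesis unfolding c1_def c2_def .
    qed
    also have "\<dots> = ennreal (\<alpha> * \<beta>)"
      using 3 p q ab by (simp flip: ennreal_plus ennreal_mult add: field_simps)
    finally show ?thesis by (simp add: \<alpha>_def \<beta>_def q_def)
  qed
qed


lemma tangent_ineq:
  fixes t lam :: real
  assumes "0 < t" "lam > 1"
  shows "t powr (1 - lam) \<ge> 1 + (lam - 1) * (1 - t)"
proof -
  have "t powr (1 - lam) = exp ((1 - lam) * ln t)" using assms by (simp add: powr_def)
  also have "\<dots> \<ge> 1 + (1 - lam) * ln t" by (rule exp_ge_add_one_self)
  finally have a: "t powr (1 - lam) \<ge> 1 + (1 - lam) * ln t" .
  have "ln t \<le> t - 1" using assms by (intro ln_le_minus_one) auto
  then have "(1 - lam) * ln t \<ge> (1 - lam) * (t - 1)" using assms by (intro mult_left_mono_neg) auto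
  with a show ?thesis by (simp add: algebra_simps)
qed

lemma diff_ineq:
  fixes X X0 lam :: real
  assumes "0 < X0" "X0 \<le> X" "lam > 1"
  shows "(X - X0) / X powr lam \<le> (X0 powr (1 - lam) - X powr (1 - lam)) / (lam - 1)"
proof -
  define t where "t = X0 / X"
  have X: "X > 0" using assms by simp
  have t: "t > 0" using assms X by (simp add: t_def)
  have X0t: "X0 = t * X" using X by (simp add: t_def)
  have "X0 powr (1 - lam) = t powr (1 - lam) * X powr (1 - lam)"
    using t X by (simp add: X0t powr_mult)
  then have "X0 powr (1 - lam) - X powr (1 - lam) = X powr (1 - lam) * (t powr (1 - lam) - 1)"
    by (simp add: algebra_simps)
  also have "\<dots> \<ge> X powr (1 - lam) * ((lam - 1) * (1 - t))"
    using tangent_ineq[OF t assms(3)] X by (intro mult_left_mono) auto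
  finally have E: "X0 powr (1 - lam) - X powr (1 - lam) \<ge> (lam - 1) * (X powr (1 - lam) * (1 - t))"
    by (simp add: algebra_simps)
  have Q: "X powr (1 - lam) * (1 - t) = (X - X0) / X powr lam"
  proof -
    have "X powr (1 - lam) = X / X powr lam" using X by (simp add: powr_diff)
    then show ?thesis using X by (simp add: t_def field_simps)
  qed
  have "(lam - 1) * ((X - X0) / X powr lam) \<le> X0 powr (1 - lam) - X powr (1 - lam)"
    using E Q by simp
  then show ?thesis using assms by (simp add: pos_le_divide_eq mult.commute)
qed

lemma alg:
  fixes lam r I X0 X X1 C :: real
  assumes lam: "lam > 1" and r: "r > 0" and I: "I > 0" and X0: "X0 > 0" "X0 \<le> X" "X \<le> X1"
    and C: "C \<ge> 0"
    and main: "X \<le> C * (1/r)^m * (X - X0) powr (1/lam) * I powr ((lam-1)/lam)"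
  shows "r powr (m * lam) * I powr (1 - lam) \<le> C powr lam * (X0 powr (1 - lam) - X1 powr (1 - lam)) / (lam - 1)"
proof -
  have X: "X > 0" using X0 by simp
  define Y where "Y = X - X0"
  have Y: "Y \<ge> 0" using X0 by (simp add: Y_def)
  have "X powr lam \<le> (C * (1/r)^m * Y powr (1/lam) * I powr ((lam-1)/lam)) powr lam"
    using main X lam by (intro powr_mono2) (auto simp: Y_def)
  also have "\<dots> = C powr lam * ((1/r)^m) powr lam * (Y powr (1/lam)) powr lam * (I powr ((lam-1)/lam)) powr lam"
    by (simp only: powr_mult)
  also have "(Y powr (1/lam)) powr lam = Y" using lam Y by (simp add: powr_powr powr_one)
  also have "(I powr ((lam-1)/lam)) powr lam = I powr (lam - 1)" using lam by (simp add: powr_powr)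
  also have "((1/r)^m) powr lam = r powr (- (m * lam))"
    using r by (simp add: powr_realpow[symmetric] powr_powr powr_minus divide_inverse inverse_powr mult.commute)
  finally have a: "X powr lam \<le> C powr lam * r powr (- (m * lam)) * Y * I powr (lam - 1)" .
  have "r powr (m * lam) * I powr (1 - lam) * X powr lam \<le>
      r powr (m * lam) * I powr (1 - lam) * (C powr lam * r powr (- (m * lam)) * Y * I powr (lam - 1))"
    using a by (intro mult_left_mono) auto
  also have "\<dots> = C powr lam * Y * ((r powr (m * lam) * r powr (- (m * lam))) * (I powr (1 - lam) * I powr (lam - 1)))"
    by (simp add: algebra_simps)
  also have "\<dots> = C powr lam * Y"
    using r I by (simp add: powr_add[symmetric])
  finally have b: "r powr (m * lam) * I powr (1 - lam) \<le> C powr lam * (Y / X powr lam)"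
    using X by (simp add: field_simps)
  have c: "Y / X powr lam \<le> (X0 powr (1 - lam) - X powr (1 - lam)) / (lam - 1)"
    unfolding Y_def by (rule diff_ineq) (use X0 lam in auto)
  have d: "X1 powr (1 - lam) \<le> X powr (1 - lam)"
    using X0 X lam by (intro powr_mono2') auto
  have "C powr lam * (Y / X powr lam) \<le> C powr lam * ((X0 powr (1 - lam) - X1 powr (1 - lam)) / (lam - 1))"
  proof (intro mult_left_mono)
    have "(X0 powr (1 - lam) - X powr (1 - lam)) / (lam - 1) \<le> (X0 powr (1 - lam) - X1 powr (1 - lam)) / (lam - 1)"
      using d lam by (intro divide_right_mono) auto
    with c show "Y / X powr lam \<le> (X0 powr (1 - lam) - X1 powr (1 - lam)) / (lam - 1)" by linarith
  qed auto
  with b show ?thesis by simp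
qed


lemma power_bracket:
  fixes \<sigma> x :: real
  assumes "\<sigma> > 1" "x \<ge> 1"
  shows "\<exists>k::nat. \<sigma> ^ k \<le> x \<and> x < \<sigma> ^ Suc k"
proof -
  define L where "L = log \<sigma> x"
  have L0: "L \<ge> 0" using assms by (simp add: L_def)
  define k where "k = nat \<lfloor>L\<rfloor>"
  have k1: "real k \<le> L" "L < real k + 1" using L0 by (auto simp: k_def)
  have "\<sigma> ^ k = \<sigma> powr real k" using assms by (simp add: powr_realpow)
  also have "\<dots> \<le> \<sigma> powr L" using k1 assms by (intro powr_mono) auto
  also have "\<sigma> powr L = x" using assms by (simp add: L_def)
  finally have a: "\<sigma> ^ k \<le> x" .
  have "x = \<sigma> powr L" using assms by (simp add: L_def)
  also have "\<dots> < \<sigma> powr (real k + 1)" using k1 assms by (intro powr_less_mono) auto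
  also have "\<dots> = \<sigma> powr real (Suc k)" by (simp add: add.commute)
  also have "\<dots> = \<sigma> ^ Suc k" by (rule powr_realpow) (use assms in simp)
  finally show ?thesis using a by blast
qed

lemma integral_finite:
  fixes Q :: "real \<Rightarrow> ennreal" and Jf :: "real \<Rightarrow> real"
  assumes \<sigma>: "\<sigma> > 1" and lam: "lam > 1" and Cst: "Cst \<ge> 0" and R: "R \<ge> 1"
    and mono: "\<And>a b. 0 < a \<Longrightarrow> a \<le> b \<Longrightarrow> Jf a \<le> Jf b"
    and Jpos: "Jf (R / \<sigma>) > 0"
    and hi: "\<And>r. r \<ge> R \<Longrightarrow> Q r \<le> ennreal (Cst * (Jf (r / \<sigma>) powr (1 - lam) - Jf (\<sigma> * r) powr (1 - lam)) / r)"
    and lo: "\<And>r. 1 \<le> r \<Longrightarrow> r < R \<Longrightarrow> Q r \<le> ennreal B" and B: "B \<ge> 0"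
  shows "(\<integral>\<^sup>+ r \<in> {1..}. Q r \<partial>lborel) < \<infinity>"
proof -
  define H where "H k = Jf (R * \<sigma> ^ k / \<sigma>) powr (1 - lam)" for k :: nat
  have Jp: "Jf (R * \<sigma> ^ k / \<sigma>) > 0" for k
  proof -
    have "R / \<sigma> \<le> R * \<sigma> ^ k / \<sigma>" using \<sigma> R by (intro divide_right_mono) (auto simp: one_le_power)
    then show ?thesis using mono[of "R/\<sigma>"] Jpos \<sigma> R by fastforce
  qed
  have Hmono: "H (Suc k) \<le> H k" for k
  proof -
    have "R * \<sigma> ^ k / \<sigma> \<le> R * \<sigma> ^ Suc k / \<sigma>" using \<sigma> R by (intro divide_right_mono) auto
    then have "Jf (R * \<sigma> ^ k / \<sigma>) \<le> Jf (R * \<sigma> ^ Suc k / \<sigma>)" using \<sigma> R by (intro mono) auto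
    then show ?thesis unfolding H_def using Jp lam by (intro powr_mono2') auto
  qed
  have Hdec: "H j \<le> H i" if "i \<le> j" for i j
    using that by (induction j) (auto simp: le_Suc_eq intro: order_trans[OF Hmono])
  have H0: "H k \<ge> 0" for k by (simp add: H_def)
  define D where "D k = Cst * (H k - H (k + 3)) / (R * \<sigma> ^ k)" for k
  define S where "S r = (\<Sum>k. ennreal (D k) * indicator {R * \<sigma> ^ k ..< R * \<sigma> ^ Suc k} r) + ennreal B * indicator {1..<R} r" for r
  have D0: "D k \<ge> 0" for k using Cst Hdec[of k "k+3"] \<sigma> R by (simp add: D_def)
  have pt: "Q r * indicator {1..} r \<le> S r" for r
  proof (cases "r < 1")
    case True then show ?thesis by simp
  next
    case False
    show ?thesis
    proof (cases "r < R")
      case True then show ?thesis using False lo[of r] by (simp add: S_def add_increasing)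
    next
      case False2: False
      have "r / R \<ge> 1" using False2 R by simp
      then obtain k where k: "\<sigma> ^ k \<le> r / R" "r / R < \<sigma> ^ Suc k" using power_bracket[OF \<sigma>] by blast
      have rk: "R * \<sigma> ^ k \<le> r" "r < R * \<sigma> ^ Suc k" using k R by (auto simp: field_simps)
      have pk: "R * \<sigma> ^ k > 0" using R \<sigma> by simp
      have "Jf (R * \<sigma> ^ k / \<sigma>) \<le> Jf (r / \<sigma>)" using rk pk \<sigma> by (intro mono divide_right_mono) auto
      then have a1: "Jf (r / \<sigma>) powr (1 - lam) \<le> H k" unfolding H_def using Jp lam by (intro powr_mono2') auto
      have "\<sigma> * r \<le> R * \<sigma> ^ (k + 3) / \<sigma>"
      proof -
        have "\<sigma> * (\<sigma> * r) \<le> \<sigma> * (\<sigma> * (R * \<sigma> ^ Suc k))" using rk \<sigma> by (intro mult_left_mono) auto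
        also have "\<dots> = R * \<sigma> ^ (k + 3)" by (simp add: numeral_3_eq_3 algebra_simps)
        finally show ?thesis using \<sigma> by (simp add: field_simps)
      qed
      then have "Jf (\<sigma> * r) \<le> Jf (R * \<sigma> ^ (k + 3) / \<sigma>)" using rk pk \<sigma> by (intro mono) auto
      moreover have "Jf (\<sigma> * r) > 0"
      proof -
        have r0: "r > 0" using rk pk by linarith
        have "r / \<sigma> \<le> r" using r0 \<sigma> by (simp add: divide_le_eq)
        also have "r \<le> \<sigma> * r" using r0 \<sigma> by simp
        finally have "Jf (r / \<sigma>) \<le> Jf (\<sigma> * r)" using r0 \<sigma> by (intro mono) auto
        then show ?thesis using Jp[of k] \<open>Jf (R * \<sigma> ^ k / \<sigma>) \<le> Jf (r / \<sigma>)\<close> by linarith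
      qed
      ultimately have a2: "H (k + 3) \<le> Jf (\<sigma> * r) powr (1 - lam)" unfolding H_def using lam by (intro powr_mono2') auto
      have "Cst * (Jf (r / \<sigma>) powr (1 - lam) - Jf (\<sigma> * r) powr (1 - lam)) / r \<le> Cst * (H k - H (k + 3)) / r"
        using a1 a2 Cst rk pk by (intro divide_right_mono mult_left_mono) auto
      also have "\<dots> \<le> D k" unfolding D_def using Cst Hdec[of k "k+3"] rk pk
        by (intro divide_left_mono mult_nonneg_nonneg) auto
      finally have "ennreal (Cst * (Jf (r / \<sigma>) powr (1 - lam) - Jf (\<sigma> * r) powr (1 - lam)) / r) \<le> ennreal (D k)"
        by (rule ennreal_leI)
      with hi[of r] False2 have "Q r \<le> ennreal (D k)" by simp
      also have "ennreal (D k) = ennreal (D k) * indicator {R * \<sigma> ^ k ..< R * \<sigma> ^ Suc k} r" using rk by simp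
      also have "\<dots> \<le> (\<Sum>k. ennreal (D k) * indicator {R * \<sigma> ^ k ..< R * \<sigma> ^ Suc k} r)"
      proof -
        define F where "F k = ennreal (D k) * indicator {R * \<sigma> ^ k ..< R * \<sigma> ^ Suc k} r" for k
        have "(\<Sum>i\<in>{k}. F i) \<le> suminf F" by (rule sum_le_suminf[OF summableI]) auto
        then have "F k \<le> suminf F" by simp
        then show ?thesis unfolding F_def .
      qed
      finally show ?thesis using False by (simp add: S_def add_increasing2)
    qed
  qed
  have "(\<integral>\<^sup>+ r \<in> {1..}. Q r \<partial>lborel) \<le> (\<integral>\<^sup>+ r. S r \<partial>lborel)"
    by (intro nn_integral_mono) (use pt in auto)
  also have "\<dots> = (\<Sum>k. ennreal (D k) * emeasure lborel {R * \<sigma> ^ k ..< R * \<sigma> ^ Suc k}) + ennreal B * emeasure lborel {1..<R}"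
    unfolding S_def by (subst nn_integral_add) (auto simp: nn_integral_suminf nn_integral_cmult_indicator)
  also have "\<dots> = (\<Sum>k. ennreal (Cst * (\<sigma> - 1) * (H k - H (k + 3)))) + ennreal (B * (R - 1))"
  proof -
    have "ennreal (D k) * emeasure lborel {R * \<sigma> ^ k ..< R * \<sigma> ^ Suc k} = ennreal (Cst * (\<sigma> - 1) * (H k - H (k + 3)))" for k
    proof -
      have "R * \<sigma> ^ k \<le> R * \<sigma> ^ Suc k" using R \<sigma> by auto
      then have "ennreal (D k) * emeasure lborel {R * \<sigma> ^ k ..< R * \<sigma> ^ Suc k} = ennreal (D k * (R * \<sigma> ^ Suc k - R * \<sigma> ^ k))"
        using D0 by (simp add: ennreal_mult)
      also have "D k * (R * \<sigma> ^ Suc k - R * \<sigma> ^ k) = Cst * (\<sigma> - 1) * (H k - H (k + 3))"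
        using R \<sigma> by (simp add: D_def field_simps)
      finally show ?thesis .
    qed
    then show ?thesis using R B by (simp add: ennreal_mult)
  qed
  also have "\<dots> < \<infinity>"
  proof -
    define f where "f k = Cst * (\<sigma> - 1) * (H k - H (k + 3))" for k
    have f0: "f k \<ge> 0" for k using Cst \<sigma> Hdec[of k "k+3"] by (simp add: f_def)
    have tel: "(\<Sum>k<N. H (k + j) - H (Suc k + j)) = H j - H (N + j)" for N j
      by (induction N) auto
    have "(\<Sum>k<N. f k) \<le> Cst * (\<sigma> - 1) * (3 * H 0)" for N
    proof -
      have "(\<Sum>k<N. H k - H (k + 3)) = (\<Sum>k<N. H (k + 0) - H (Suc k + 0)) + (\<Sum>k<N. H (k + 1) - H (Suc k + 1)) + (\<Sum>k<N. H (k + 2) - H (Suc k + 2))"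
        by (simp add: sum.distrib[symmetric] algebra_simps numeral_3_eq_3)
      also have "\<dots> \<le> 3 * H 0" unfolding tel using Hdec[of 0 1] Hdec[of 0 2] H0[of N] H0[of "N+1"] H0[of "N+2"] by simp
      finally show ?thesis using Cst \<sigma> by (simp add: f_def sum_distrib_left[symmetric] mult_left_mono)
    qed
    then have "summable f" using f0 by (intro summableI_nonneg_bounded) auto
    then have "(\<Sum>k. ennreal (f k)) = ennreal (\<Sum>k. f k)" using f0 by (intro suminf_ennreal2) auto
    then show ?thesis by (simp add: f_def[symmetric])
  qed
  finally show ?thesis .
qed


lemma cont_meas: "continuous_on UNIV (f::real^'n::finite \<Rightarrow> real) \<Longrightarrow> f \<in> borel_measurable lebesgue"
  by (rule measurable_completion) (simp add: borel_measurable_continuous_onI)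

lemma pow_le_powr:
  fixes p lam :: real
  assumes "0 \<le> p" "p \<le> 1" "lam > 0" "real K / lam \<le> real (K - M)" "M < K"
  shows "p ^ (K - M) \<le> (p ^ K) powr (1 / lam)"
proof (cases "p = 0")
  case True
  obtain j where j: "K - M = Suc j" using assms by (metis Suc_diff_Suc Suc_le_eq le_add_diff_inverse less_imp_le add_Suc_right)
  obtain i where i: "K = Suc i" using assms by (cases K) auto
  show ?thesis using True j i by simp
next
  case False
  then have p: "p > 0" using assms by simp
  have "p ^ (K - M) = p powr real (K - M)" using p by (simp add: powr_realpow)
  also have "\<dots> \<le> p powr (real K / lam)" using assms p by (intro powr_mono') auto
  also have "\<dots> = (p ^ K) powr (1 / lam)" using p by (simp add: powr_realpow[symmetric] powr_powr)
  finally show ?thesis .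
qed

locale sol_setting =
  fixes m :: nat and lam \<sigma> :: real
    and A :: "('n::finite \<Rightarrow> nat) \<Rightarrow> real^'n \<Rightarrow> real \<Rightarrow> real"
    and a b u :: "real^'n \<Rightarrow> real"
  assumes m1: "m \<ge> 1" and lam1: "lam > 1"
    and am: "a \<in> borel_measurable lebesgue" and apos: "\<And>x. a x > 0"
    and bm: "b \<in> borel_measurable lebesgue" and bpos: "\<And>x. b x > 0"
    and Abd: "AE x in lebesgue. \<forall>\<zeta> \<alpha>. mi_order \<alpha> = m \<longrightarrow> \<bar>A \<alpha> x \<zeta>\<bar> \<le> a x * \<bar>\<zeta>\<bar>"
    and sig: "\<sigma> > 1"
    and sol: "is_solution m lam A b u"
begin

definition "g x = b x * \<bar>u x\<bar> powr lam"

lemma g0: "g x \<ge> 0" using bpos[of x] by (simp add: g_def)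

lemma g_int: "integrable lebesgue (\<lambda>x. indicator (cball 0 \<rho>) x *\<^sub>R g x)"
proof -
  have "loc_integrable g" using sol by (simp add: is_solution_def g_def[abs_def])
  then show ?thesis by (simp add: loc_integrable_def set_integrable_def)
qed

lemma g_meas_cball: "(\<lambda>x. g x * indicator (cball 0 \<rho>) x) \<in> borel_measurable lebesgue"
  using borel_measurable_integrable[OF g_int[of \<rho>]] by (simp add: mult.commute)

lemma g_fin: "(\<integral>\<^sup>+ x. ennreal (g x * indicator (cball 0 \<rho>) x) \<partial>lebesgue) < \<infinity>"
proof -
  have "(\<integral>\<^sup>+ x. ennreal (norm (indicator (cball 0 \<rho>) x *\<^sub>R g x)) \<partial>lebesgue) < \<infinity>"
    using g_int[of \<rho>] by (simp add: integrable_iff_bounded)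
  moreover have "\<And>x. norm (indicator (cball 0 \<rho>) x *\<^sub>R g x) = g x * indicator (cball 0 \<rho>) x"
    using g0 by (simp split: split_indicator)
  ultimately show ?thesis by simp
qed

definition "Jn \<rho> = (\<integral>\<^sup>+ x. ennreal (g x * indicator (ball 0 \<rho>) x) \<partial>lebesgue)"
definition "J \<rho> = enn2real (Jn \<rho>)"

lemma g_meas_ball: "(\<lambda>x. g x * indicator (ball 0 \<rho>) x) \<in> borel_measurable lebesgue"
proof -
  have "(\<lambda>x. g x * indicator (ball 0 \<rho>) x) = (\<lambda>x. (g x * indicator (cball 0 \<rho>) x) * indicator (ball 0 \<rho>) x)"
    by (auto split: split_indicator)
  also have "\<dots> \<in> borel_measurable lebesgue"
    by (rule borel_measurable_times[OF g_meas_cball], rule borel_measurable_indicator) simp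
  finally show ?thesis .
qed

lemma Jn_fin: "Jn \<rho> < \<infinity>"
proof -
  have "Jn \<rho> \<le> (\<integral>\<^sup>+ x. ennreal (g x * indicator (cball 0 \<rho>) x) \<partial>lebesgue)"
    unfolding Jn_def using g0 by (intro nn_integral_mono ennreal_leI) (auto split: split_indicator)
  then show ?thesis using g_fin[of \<rho>] by simp
qed

lemma J_eq: "ennreal (J \<rho>) = Jn \<rho>"
  using Jn_fin[of \<rho>] by (simp add: J_def ennreal_enn2real_if)

lemma J_mono: "\<rho>1 \<le> \<rho>2 \<Longrightarrow> J \<rho>1 \<le> J \<rho>2"
proof -
  assume "\<rho>1 \<le> \<rho>2"
  then have "Jn \<rho>1 \<le> Jn \<rho>2"
    unfolding Jn_def using g0 by (intro nn_integral_mono ennreal_leI) (auto split: split_indicator)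
  then show ?thesis unfolding J_def using Jn_fin[of \<rho>2] by (intro enn2real_mono) auto
qed

lemma J_nonneg: "J \<rho> \<ge> 0" by (simp add: J_def)

lemma J_pos:
  assumes "\<not> (AE x in lebesgue. u x = 0)"
  shows "\<exists>\<rho>>0. J \<rho> > 0"
proof (rule ccontr)
  assume "\<not> (\<exists>\<rho>>0. J \<rho> > 0)"
  then have J0: "J \<rho> = 0" if "\<rho> > 0" for \<rho> using J_nonneg[of \<rho>] that by force
  have "AE x in lebesgue. ennreal (g x * indicator (ball 0 (real (Suc k))) x) = 0" for k
  proof -
    have "Jn (real (Suc k)) = 0" using J0[of "real (Suc k)"] J_eq[of "real (Suc k)"] by simp
    then show ?thesis unfolding Jn_def using g_meas_ball
      by (subst nn_integral_0_iff_AE[symmetric]) auto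
  qed
  then have "AE x in lebesgue. \<forall>k. ennreal (g x * indicator (ball 0 (real (Suc k))) x) = 0"
    by (simp add: AE_all_countable)
  then have "AE x in lebesgue. u x = 0"
  proof eventually_elim
    case (elim x)
    obtain k where k: "norm x < real (Suc k)" using reals_Archimedean2[of "norm x"]
      by (metis less_Suc_eq of_nat_Suc of_nat_less_iff order_less_trans)
    then have "g x = 0" using elim[rule_format, of k] g0[of x] by simp
    then show ?case using bpos[of x] by (simp add: g_def)
  qed
  with assms show False by simp
qed

definition "c0 = 1 / \<sigma>^2"
definition "kk = nat \<lceil>m * lam / (lam - 1)\<rceil> + m + 1"
definition "phi r = tf c0 kk r"

lemma c0: "c0 < 1" "c0 > 0"
proof -
  have "\<sigma>^2 > 1" using sig by (simp add: one_less_power)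
  then show "c0 < 1" "c0 > 0" by (auto simp: c0_def divide_less_eq)
qed
lemma kk: "m < kk" "0 < kk" "real kk / lam \<le> real (kk - m)"
proof -
  show "m < kk" "0 < kk" by (auto simp: kk_def)
  have "m * lam / (lam - 1) \<le> real (nat \<lceil>m * lam / (lam - 1)\<rceil>)" by linarith
  then have "m * lam / (lam - 1) \<le> real kk" by (simp add: kk_def)
  then have "m * lam \<le> real kk * (lam - 1)" using lam1 by (simp add: divide_le_eq)
  then have "real kk \<le> (real kk - m) * lam" by (simp add: algebra_simps)
  then show "real kk / lam \<le> real (kk - m)" using lam1 \<open>m < kk\<close> by (simp add: divide_le_eq of_nat_diff)
qed

lemma Fsq_div: "r > 0 \<Longrightarrow> Fsq x / r^2 = (norm x / r)^2"
  by (simp add: Fsq_norm power_divide)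

lemma phi_one: "r > 0 \<Longrightarrow> norm x < r / \<sigma> \<Longrightarrow> phi r x = 1"
proof -
  assume r: "r > 0" and x: "norm x < r / \<sigma>"
  have "norm x / r < 1 / \<sigma>" using x r by (simp add: field_simps)
  then have "(norm x / r)^2 \<le> (1/\<sigma>)^2" using r by (intro power_mono) auto
  then have "Fsq x / r^2 \<le> c0" using r by (simp add: Fsq_div c0_def power_divide)
  then show ?thesis using cutoff_one[OF c0(1)] by (simp add: phi_def tf_def)
qed

lemma phi_zero: "r > 0 \<Longrightarrow> norm x \<ge> r \<Longrightarrow> phi r x = 0"
proof -
  assume r: "r > 0" and x: "norm x \<ge> r"
  have "1 \<le> norm x / r" using x r by simp
  then have "1 \<le> (norm x / r)^2" by (simp add: one_le_power)
  then have "1 \<le> Fsq x / r^2" using r by (simp add: Fsq_div)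
  then show ?thesis using cutoff_zero[OF c0(1)] kk(2) by (simp add: phi_def tf_def)
qed

lemma phi_01: "0 \<le> phi r x" "phi r x \<le> 1"
  using cutoff_bounds[OF c0(1)] by (auto simp: phi_def tf_def power_le_one)

lemma phi_cont: "continuous_on UNIV (phi r)"
proof -
  have "continuous_on UNIV (pdiffs [] (tf c0 kk r))" using smooth_tf[OF c0(1), of kk r] unfolding smooth_fun_def by blast
  then show ?thesis by (simp add: phi_def)
qed

lemma phi_test: assumes "r > 0" shows "test_fun (phi r)"
proof -
  have "{x. phi r x \<noteq> 0} \<subseteq> ball 0 r"
  proof safe
    fix x assume "phi r x \<noteq> 0"
    show "x \<in> ball 0 r"
    proof (rule ccontr)
      assume "x \<notin> ball 0 r"
      then have "norm x \<ge> r" by simp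
      from phi_zero[OF assms this] \<open>phi r x \<noteq> 0\<close> show False by simp
    qed
  qed
  then have "bounded {x. phi r x \<noteq> 0}" using bounded_subset by blast
  moreover have "smooth_fun (phi r)" unfolding phi_def by (rule smooth_tf[OF c0(1)])
  ultimately show ?thesis unfolding test_fun_def by (simp add: compact_closure)
qed

end


context sol_setting
begin

definition "ann r = ball 0 (\<sigma> * r) - ball 0 (r / \<sigma>)"
definition "w x = a x powr (lam / (lam - 1)) * b x powr (- 1 / (lam - 1))"
definition "In r = (\<integral>\<^sup>+ x \<in> ann r. ennreal (w x) \<partial>lebesgue)"

lemma ann_sets: "ann r \<in> sets lebesgue"
  unfolding ann_def by (intro sets.Diff) simp_all

lemma Dbound_ex: "\<exists>CfA. \<forall>\<alpha>::'n \<Rightarrow> nat. CfA \<alpha> \<ge> 0 \<and> (mi_order \<alpha> = m \<longrightarrow> (\<forall>r>0. \<forall>x.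
    \<bar>Dalpha \<alpha> (phi r) x\<bar> \<le> CfA \<alpha> * (1/r)^m * phi r x powr (1/lam) * indicator (ann r) x))"
proof -
  have "\<forall>\<alpha>::'n \<Rightarrow> nat. \<exists>C. C \<ge> 0 \<and> (mi_order \<alpha> = m \<longrightarrow> (\<forall>r>0. \<forall>x.
    \<bar>Dalpha \<alpha> (phi r) x\<bar> \<le> C * (1/r)^m * phi r x powr (1/lam) * indicator (ann r) x))"
  proof
    fix \<alpha> :: "'n \<Rightarrow> nat"
    show "\<exists>C. C \<ge> 0 \<and> (mi_order \<alpha> = m \<longrightarrow> (\<forall>r>0. \<forall>x.
      \<bar>Dalpha \<alpha> (phi r) x\<bar> \<le> C * (1/r)^m * phi r x powr (1/lam) * indicator (ann r) x))"
    proof (cases "mi_order \<alpha> = m")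
      case False then show ?thesis by (intro exI[of _ 0]) auto
    next
      case True
      define "is" where "is = (SOME is. \<forall>i. count_list is i = \<alpha> i)"
      have len: "length is = m" and D: "\<And>f. Dalpha \<alpha> f = pdiffs is f"
        using Dalpha_list[OF True] by (auto simp: is_def)
      have ne: "is \<noteq> []" using len m1 by auto
      obtain C where C: "C \<ge> 0" "\<forall>r>0. \<forall>x. \<bar>pdiffs is (tf c0 kk r) x\<bar> \<le> C * (1/r)^m * cutoff c0 (Fsq x / r^2) ^ (kk - m)"
        using tf_bound[OF c0(1) less_imp_le[OF kk(1)] kk(2) len] by auto
      have bound: "\<bar>Dalpha \<alpha> (phi r) x\<bar> \<le> C * (1/r)^m * phi r x powr (1/lam) * indicator (ann r) x"
        if r: "r > 0" for r :: real and x :: "real^'n"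
      proof -
        show "\<bar>Dalpha \<alpha> (phi r) x\<bar> \<le> C * (1/r)^m * phi r x powr (1/lam) * indicator (ann r) x"
        proof (cases "x \<in> ann r")
          case True
          have "cutoff c0 (Fsq x / r^2) ^ (kk - m) \<le> (cutoff c0 (Fsq x / r^2) ^ kk) powr (1/lam)"
            using cutoff_bounds[OF c0(1)] lam1 kk by (intro pow_le_powr) auto
          then have "C * (1/r)^m * cutoff c0 (Fsq x / r^2) ^ (kk - m) \<le> C * (1/r)^m * phi r x powr (1/lam)"
            using C r by (intro mult_left_mono) (auto simp: phi_def tf_def)
          moreover have "\<bar>pdiffs is (tf c0 kk r) x\<bar> \<le> C * (1/r)^m * cutoff c0 (Fsq x / r^2) ^ (kk - m)"
            using C(2) r by blast
          ultimately have "\<bar>pdiffs is (phi r) x\<bar> \<le> C * (1/r)^m * phi r x powr (1/lam)"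
            unfolding phi_def by linarith
          then show ?thesis using True by (simp add: D)
        next
          case False
          have "r < \<sigma> * r" using sig r by simp
          then consider "norm x < r / \<sigma>" | "norm x > r" using False
            unfolding ann_def by (auto simp: not_less)
          then have "pdiffs is (phi r) x = 0"
          proof cases
            case 1
            have "pdiffs is (phi r) x = (if is = [] then 1 else 0)"
              by (rule loc_const[where U="ball 0 (r / \<sigma>)"]) (use 1 phi_one[OF r] in auto)
            then show ?thesis using ne by simp
          next
            case 2
            have z: "phi r y = 0" if "y \<in> {x. norm x > r}" for y
            proof -
              have "r \<le> norm y" using that by simp
              then show ?thesis by (rule phi_zero[OF r])
            qed
            have "pdiffs is (phi r) x = (if is = [] then 0 else 0)"
              by (rule loc_const[where U="{x. norm x > r}"]) (use 2 z in \<open>auto intro: open_Collect_less continuous_intros\<close>)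
            then show ?thesis by simp
          qed
          then show ?thesis using False by (simp add: D)
        qed
      qed
      show ?thesis using C(1) bound by blast
    qed
  qed
  then show ?thesis by (rule choice)
qed

definition CfA :: "('n \<Rightarrow> nat) \<Rightarrow> real" where "CfA = (SOME CfA. \<forall>\<alpha>. CfA \<alpha> \<ge> 0 \<and> (mi_order \<alpha> = m \<longrightarrow> (\<forall>r>0. \<forall>x.
    \<bar>Dalpha \<alpha> (phi r) x\<bar> \<le> CfA \<alpha> * (1/r)^m * phi r x powr (1/lam) * indicator (ann r) x)))"

lemma CfA: "CfA \<alpha> \<ge> 0" "mi_order \<alpha> = m \<Longrightarrow> r > 0 \<Longrightarrow>
    \<bar>Dalpha \<alpha> (phi r) x\<bar> \<le> CfA \<alpha> * (1/r)^m * phi r x powr (1/lam) * indicator (ann r) x"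
proof -
  have "\<forall>\<alpha>. CfA \<alpha> \<ge> 0 \<and> (mi_order \<alpha> = m \<longrightarrow> (\<forall>r>0. \<forall>x.
    \<bar>Dalpha \<alpha> (phi r) x\<bar> \<le> CfA \<alpha> * (1/r)^m * phi r x powr (1/lam) * indicator (ann r) x))"
    unfolding CfA_def by (rule someI_ex[OF Dbound_ex])
  then show "CfA \<alpha> \<ge> 0" "mi_order \<alpha> = m \<Longrightarrow> r > 0 \<Longrightarrow>
    \<bar>Dalpha \<alpha> (phi r) x\<bar> \<le> CfA \<alpha> * (1/r)^m * phi r x powr (1/lam) * indicator (ann r) x"
    by blast+
qed

definition Ctot :: real where "Ctot = (\<Sum>\<alpha>\<in>{\<alpha>. mi_order \<alpha> = m}. CfA \<alpha>)"

lemma Ctot0: "Ctot \<ge> 0" unfolding Ctot_def using CfA(1) by (simp add: sum_nonneg)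

end


context sol_setting
begin

lemma key:
  assumes r: "r \<ge> 1" and Jp: "J (r / \<sigma>) > 0" and If: "In r < \<infinity>" and Ip: "enn2real (In r) > 0"
  shows "r powr (m * lam) * enn2real (In r) powr (1 - lam)
    \<le> Ctot powr lam * (J (r / \<sigma>) powr (1 - lam) - J (\<sigma> * r) powr (1 - lam)) / (lam - 1)"
proof -
  have r0: "r > 0" using r by simp
  define Ir where "Ir = enn2real (In r)"
  define ind :: "real^'n \<Rightarrow> real" where "ind x = indicator (ann r) x" for x
  define f1 where "f1 x = (g x * phi r x * ind x) powr (1/lam)" for x
  define f2 where "f2 x = a x * b x powr (-1/lam) * ind x" for x
  define S where "S = {\<alpha>::'n \<Rightarrow> nat. mi_order \<alpha> = m}"
  define F where "F x = (\<Sum>\<alpha>\<in>S. A \<alpha> x (u x) * Dalpha \<alpha> (phi r) x)" for x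
  have ann_sub: "ann r \<subseteq> cball 0 (\<sigma> * r)" by (auto simp: ann_def)
  have ind01: "ind x = 0 \<or> ind x = 1" for x by (simp add: ind_def split: split_indicator)
  have phim: "phi r \<in> borel_measurable lebesgue" by (rule cont_meas[OF phi_cont])
  have indm: "ind \<in> borel_measurable lebesgue"
    unfolding ind_def[abs_def] by (rule borel_measurable_indicator[OF ann_sets])
  have gpi_eq: "(\<lambda>x. g x * phi r x * ind x) = (\<lambda>x. (g x * indicator (cball 0 (\<sigma> * r)) x) * phi r x * ind x)"
  proof
    fix x show "g x * phi r x * ind x = g x * indicator (cball 0 (\<sigma> * r)) x * phi r x * ind x"
    proof (cases "x \<in> ann r")
      case True then have "x \<in> cball 0 (\<sigma> * r)" using ann_sub by blast
      then show ?thesis by simp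
    qed (simp add: ind_def)
  qed
  have gpim: "(\<lambda>x. g x * phi r x * ind x) \<in> borel_measurable lebesgue"
    unfolding gpi_eq by (rule borel_measurable_times[OF borel_measurable_times[OF g_meas_cball phim] indm])
  have f1m: "f1 \<in> borel_measurable lebesgue" unfolding f1_def[abs_def]
    by (rule powr_real_measurable[OF gpim]) simp
  have f2m: "f2 \<in> borel_measurable lebesgue" unfolding f2_def[abs_def]
    by (intro borel_measurable_times[OF borel_measurable_times[OF am powr_real_measurable[OF bm]] indm]) simp
  have f10: "f1 x \<ge> 0" for x by (simp add: f1_def)
  have f20: "f2 x \<ge> 0" for x using apos[of x] by (simp add: f2_def ind_def)
  define Yn where "Yn = (\<integral>\<^sup>+ x. ennreal (g x * phi r x * ind x) \<partial>lebesgue)"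
  have Yn_fin: "Yn < \<infinity>"
  proof -
    have "Yn \<le> (\<integral>\<^sup>+ x. ennreal (g x * indicator (cball 0 (\<sigma> * r)) x) \<partial>lebesgue)"
      unfolding Yn_def
    proof (intro nn_integral_mono ennreal_leI)
      fix x
      have e: "g x * phi r x * ind x = g x * indicator (cball 0 (\<sigma> * r)) x * phi r x * ind x"
        using fun_cong[OF gpi_eq, of x] by simp
      have "phi r x * ind x \<le> 1" using phi_01[of r x] ind01[of x] by auto
      moreover have "0 \<le> phi r x * ind x" using phi_01[of r x] ind01[of x] by auto
      ultimately have le: "g x * indicator (cball 0 (\<sigma> * r)) x * phi r x * ind x \<le> g x * indicator (cball 0 (\<sigma> * r)) x"
        using g0[of x] by (simp add: mult.assoc mult_left_le split: split_indicator)
      show "g x * phi r x * ind x \<le> g x * indicator (cball 0 (\<sigma> * r)) x" using e le by linarith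
    qed
    then show ?thesis using g_fin[of "\<sigma> * r"] by simp
  qed
  define Y where "Y = enn2real Yn"
  have Y0: "Y \<ge> 0" by (simp add: Y_def)
  have f1p: "(\<integral>\<^sup>+ x. ennreal (f1 x powr lam) \<partial>lebesgue) = ennreal Y"
  proof -
    have "f1 x powr lam = g x * phi r x * ind x" for x
    proof -
      have "0 \<le> g x * phi r x * ind x" using g0[of x] phi_01[of r x] ind01[of x] by auto
      then show ?thesis using lam1 by (simp add: f1_def powr_powr powr_one)
    qed
    then show ?thesis using Yn_fin by (simp add: Y_def Yn_def[symmetric] ennreal_enn2real_if)
  qed
  have f2p: "(\<integral>\<^sup>+ x. ennreal (f2 x powr (lam/(lam-1))) \<partial>lebesgue) = ennreal Ir"
  proof -
    have "f2 x powr (lam/(lam-1)) = w x * ind x" for x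
    proof -
      have "f2 x powr (lam/(lam-1)) = a x powr (lam/(lam-1)) * (b x powr (-1/lam)) powr (lam/(lam-1)) * ind x powr (lam/(lam-1))"
        by (simp add: f2_def powr_mult)
      also have "(b x powr (-1/lam)) powr (lam/(lam-1)) = b x powr (-1/(lam-1))"
        using lam1 by (simp add: powr_powr)
      also have "ind x powr (lam/(lam-1)) = ind x" using ind01[of x] lam1 by auto
      finally show ?thesis by (simp add: w_def)
    qed
    moreover have "(\<integral>\<^sup>+ x. ennreal (w x * ind x) \<partial>lebesgue) = In r"
      unfolding In_def ind_def by (intro nn_integral_cong) (simp split: split_indicator)
    ultimately show ?thesis using If by (simp add: Ir_def ennreal_enn2real_if)
  qed
  have hol: "(\<integral>\<^sup>+ x. ennreal (f1 x * f2 x) \<partial>lebesgue) \<le> ennreal (Y powr (1/lam) * Ir powr ((lam-1)/lam))"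
    by (rule holder[OF lam1 f1m f2m f10 f20 f1p Y0 f2p]) (simp add: Ir_def)
  have f12: "f1 x * f2 x = a x * \<bar>u x\<bar> * phi r x powr (1/lam) * ind x" for x
  proof (cases "ind x = 0")
    case True then show ?thesis by (simp add: f1_def f2_def)
  next
    case False
    then have i1: "ind x = 1" using ind01[of x] by auto
    have "(g x * phi r x) powr (1/lam) = b x powr (1/lam) * \<bar>u x\<bar> * phi r x powr (1/lam)"
      using lam1 by (simp add: g_def powr_mult powr_powr powr_one)
    moreover have "b x powr (1/lam) * b x powr (-1/lam) = 1"
      using bpos[of x] by (simp add: powr_add[symmetric])
    ultimately show ?thesis using i1 by (simp add: f1_def f2_def algebra_simps)
  qed
  have AEb: "AE x in lebesgue. ennreal (F x) \<le> ennreal (Ctot * (1/r)^m) * ennreal (f1 x * f2 x)"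
    using Abd
  proof eventually_elim
    case (elim x)
    have "F x \<le> \<bar>F x\<bar>" by simp
    also have "\<dots> \<le> (\<Sum>\<alpha>\<in>S. \<bar>A \<alpha> x (u x)\<bar> * \<bar>Dalpha \<alpha> (phi r) x\<bar>)"
      unfolding F_def by (rule order_trans[OF sum_abs]) (simp add: abs_mult)
    also have "\<dots> \<le> (\<Sum>\<alpha>\<in>S. (a x * \<bar>u x\<bar>) * (CfA \<alpha> * (1/r)^m * phi r x powr (1/lam) * ind x))"
    proof (intro sum_mono mult_mono)
      fix \<alpha> assume "\<alpha> \<in> S"
      then have "mi_order \<alpha> = m" by (simp add: S_def)
      then show "\<bar>A \<alpha> x (u x)\<bar> \<le> a x * \<bar>u x\<bar>" using elim by blast
      show "\<bar>Dalpha \<alpha> (phi r) x\<bar> \<le> CfA \<alpha> * (1/r)^m * phi r x powr (1/lam) * ind x"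
        using CfA(2)[OF \<open>mi_order \<alpha> = m\<close> r0] by (simp add: ind_def)
      show "0 \<le> a x * \<bar>u x\<bar>" using apos[of x] by simp
    qed simp
    also have "\<dots> = (\<Sum>\<alpha>\<in>S. CfA \<alpha> * ((1/r)^m * (a x * \<bar>u x\<bar> * phi r x powr (1/lam) * ind x)))"
      by (intro sum.cong) (simp_all add: algebra_simps)
    also have "\<dots> = Ctot * ((1/r)^m * (a x * \<bar>u x\<bar> * phi r x powr (1/lam) * ind x))"
      unfolding Ctot_def S_def[symmetric] by (rule sum_distrib_right[symmetric])
    also have "\<dots> = Ctot * (1/r)^m * (f1 x * f2 x)"
      unfolding f12 by (simp add: algebra_simps)
    finally have "F x \<le> Ctot * (1/r)^m * (f1 x * f2 x)" .
    then have "ennreal (F x) \<le> ennreal (Ctot * (1/r)^m * (f1 x * f2 x))" by (rule ennreal_leI)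
    also have "\<dots> = ennreal (Ctot * (1/r)^m) * ennreal (f1 x * f2 x)"
      using Ctot0 f10[of x] f20[of x] r0 by (intro ennreal_mult) auto
    finally show ?case .
  qed
  have f12m: "(\<lambda>x. ennreal (f1 x * f2 x)) \<in> borel_measurable lebesgue"
    by (rule measurable_compose[OF borel_measurable_times[OF f1m f2m]]) simp
  have Fn: "(\<integral>\<^sup>+ x. ennreal (F x) \<partial>lebesgue) \<le> ennreal (Ctot * (1/r)^m * (Y powr (1/lam) * Ir powr ((lam-1)/lam)))"
  proof -
    have "(\<integral>\<^sup>+ x. ennreal (F x) \<partial>lebesgue) \<le> (\<integral>\<^sup>+ x. ennreal (Ctot * (1/r)^m) * ennreal (f1 x * f2 x) \<partial>lebesgue)"
      by (rule nn_integral_mono_AE[OF AEb])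
    also have "\<dots> = ennreal (Ctot * (1/r)^m) * (\<integral>\<^sup>+ x. ennreal (f1 x * f2 x) \<partial>lebesgue)"
      by (rule nn_integral_cmult[OF f12m])
    also have "\<dots> \<le> ennreal (Ctot * (1/r)^m) * ennreal (Y powr (1/lam) * Ir powr ((lam-1)/lam))"
      by (intro mult_left_mono hol) auto
    also have "\<dots> = ennreal (Ctot * (1/r)^m * (Y powr (1/lam) * Ir powr ((lam-1)/lam)))"
      using Ctot0 r0 by (simp add: ennreal_mult[symmetric])
    finally show ?thesis .
  qed
  have FL: "integral\<^sup>L lebesgue F \<le> Ctot * (1/r)^m * (Y powr (1/lam) * Ir powr ((lam-1)/lam))"
    by (rule integral_real_bounded[OF _ Fn]) (use Ctot0 r0 in auto)
  have solr: "(\<integral>x. g x * phi r x \<partial>lebesgue) \<le> integral\<^sup>L lebesgue F"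
  proof -
    have "test_fun (phi r) \<and> (\<forall>x. phi r x \<ge> 0)" using phi_test[OF r0] phi_01 by auto
    then have "(\<integral>x. b x * \<bar>u x\<bar> powr lam * phi r x \<partial>lebesgue)
        \<le> (\<integral>x. (\<Sum>\<alpha>\<in>{\<alpha>. mi_order \<alpha> = m}. A \<alpha> x (u x) * Dalpha \<alpha> (phi r) x) \<partial>lebesgue)"
      using sol unfolding is_solution_def by blast
    then show ?thesis by (simp add: F_def[abs_def] S_def g_def)
  qed
  have gp_eq: "(\<lambda>x. g x * phi r x) = (\<lambda>x. (g x * indicator (cball 0 r) x) * phi r x)"
  proof
    fix x show "g x * phi r x = g x * indicator (cball 0 r) x * phi r x"
      using phi_zero[OF r0, of x] by (cases "x \<in> cball 0 r") auto
  qed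
  have gpm: "(\<lambda>x. g x * phi r x) \<in> borel_measurable lebesgue"
    unfolding gp_eq by (rule borel_measurable_times[OF g_meas_cball phim])
  define Xn where "Xn = (\<integral>\<^sup>+ x. ennreal (g x * phi r x) \<partial>lebesgue)"
  have XL: "(\<integral>x. g x * phi r x \<partial>lebesgue) = enn2real Xn"
  proof -
    have "0 \<le> g x * phi r x" for x using g0[of x] phi_01(1)[of r x] by simp
    then show ?thesis unfolding Xn_def by (intro integral_eq_nn_integral[OF gpm] AE_I2)
  qed
  have split: "Xn = Jn (r / \<sigma>) + Yn"
  proof -
    have "ennreal (g x * phi r x) = ennreal (g x * indicator (ball 0 (r / \<sigma>)) x) + ennreal (g x * phi r x * ind x)" for x
    proof -
      consider "norm x < r / \<sigma>" | "r / \<sigma> \<le> norm x" "norm x < \<sigma> * r" | "\<sigma> * r \<le> norm x" by linarith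
      then show ?thesis
      proof cases
        case 1 then show ?thesis using phi_one[OF r0 1] by (simp add: ind_def ann_def)
      next
        case 2 then show ?thesis by (simp add: ind_def ann_def)
      next
        case 3
        have "r \<le> \<sigma> * r" using sig r0 by simp
        then have "r \<le> norm x" using 3 by linarith
        then have "phi r x = 0" by (rule phi_zero[OF r0])
        moreover have "r / \<sigma> \<le> norm x"
        proof -
          have "r / \<sigma> \<le> r" using sig r0 by (simp add: divide_le_eq)
          then show ?thesis using \<open>r \<le> norm x\<close> by linarith
        qed
        ultimately show ?thesis by (simp add: ind_def)
      qed
    qed
    then have "Xn = (\<integral>\<^sup>+ x. ennreal (g x * indicator (ball 0 (r / \<sigma>)) x) + ennreal (g x * phi r x * ind x) \<partial>lebesgue)"
      unfolding Xn_def by simp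
    also have "\<dots> = Jn (r / \<sigma>) + Yn"
      unfolding Jn_def Yn_def using g_meas_ball gpim by (intro nn_integral_add) auto
    finally show ?thesis .
  qed
  have Xle: "Xn \<le> Jn (\<sigma> * r)"
    unfolding Xn_def Jn_def
  proof (intro nn_integral_mono ennreal_leI)
    fix x
    show "g x * phi r x \<le> g x * indicator (ball 0 (\<sigma> * r)) x"
    proof (cases "norm x < \<sigma> * r")
      case True then show ?thesis using g0[of x] phi_01[of r x] by (simp add: mult_left_le)
    next
      case False
      have "r \<le> \<sigma> * r" using sig r0 by simp
      then have "r \<le> norm x" using False by linarith
      then have "phi r x = 0" by (rule phi_zero[OF r0])
      then show ?thesis using g0[of x] by simp
    qed
  qed
  define X where "X = enn2real Xn"
  have XJY: "X = J (r / \<sigma>) + Y"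
    unfolding X_def split J_def Y_def using Jn_fin Yn_fin by (simp add: enn2real_plus)
  have XJ: "X \<le> J (\<sigma> * r)"
    unfolding X_def J_def using Xle Jn_fin by (intro enn2real_mono) auto
  have main: "X \<le> Ctot * (1/r)^m * (X - J (r / \<sigma>)) powr (1/lam) * Ir powr ((lam-1)/lam)"
    using solr FL XL XJY by (simp add: X_def mult.assoc)
  have "J (r / \<sigma>) \<le> X" using XJY Y0 by simp
  from alg[OF lam1 r0 _ Jp this XJ Ctot0 main] Ip
  show ?thesis by (simp add: Ir_def)
qed

end


lemma conv_powr:
  fixes r Ir lam :: real and m n :: nat
  assumes "r > 0" "Ir > 0"
  shows "r powr ((real m - real n) * lam + real n - 1) * (Ir / r ^ n) powr (1 - lam)
       = r powr (m * lam) * Ir powr (1 - lam) / r"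
proof -
  have a: "(r ^ n) powr (1 - lam) = r powr (real n * (1 - lam))"
    using assms by (simp add: powr_realpow[symmetric] powr_powr)
  have "r powr ((real m - real n) * lam + real n - 1) * (Ir / r ^ n) powr (1 - lam)
      = Ir powr (1 - lam) * (r powr ((real m - real n) * lam + real n - 1) / r powr (real n * (1 - lam)))"
    using assms by (simp add: powr_divide a)
  also have "r powr ((real m - real n) * lam + real n - 1) / r powr (real n * (1 - lam)) = r powr (m * lam - 1)"
    using assms by (simp add: powr_diff[symmetric] algebra_simps)
  also have "r powr (m * lam - 1) = r powr (m * lam) / r"
    using assms by (simp add: powr_diff)
  finally show ?thesis by simp
qed

context sol_setting
begin

lemma qfun_eq: "qfun lam \<sigma> a b r = (if In r = \<infinity> then 0 else ennreal ((enn2real (In r) / r ^ CARD('n)) powr (1 - lam)))"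
  by (simp add: qfun_def In_def ann_def w_def Let_def)

definition "ee = (real m - real CARD('n)) * lam + real CARD('n) - 1"
definition "Cst = Ctot powr lam / (lam - 1)"

lemma Cst0: "Cst \<ge> 0" using lam1 by (simp add: Cst_def)

lemma hi:
  assumes "R \<ge> 1" "J (R / \<sigma>) > 0" "r \<ge> R"
  shows "ennreal (r powr ee) * qfun lam \<sigma> a b r \<le> ennreal (Cst * (J (r / \<sigma>) powr (1 - lam) - J (\<sigma> * r) powr (1 - lam)) / r)"
proof -
  have r: "r \<ge> 1" using assms by simp
  have "J (R / \<sigma>) \<le> J (r / \<sigma>)" using assms sig by (intro J_mono divide_right_mono) auto
  then have Jp: "J (r / \<sigma>) > 0" using assms by simp
  show ?thesis
  proof (cases "In r = \<infinity>")
    case True then show ?thesis by (simp add: qfun_eq)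
  next
    case False
    show ?thesis
    proof (cases "enn2real (In r) = 0")
      case True then show ?thesis using False lam1 by (simp add: qfun_eq)
    next
      case False2: False
      have Ip: "enn2real (In r) > 0" using False2 enn2real_nonneg[of "In r"] by linarith
      have If: "In r < \<infinity>" using False by (simp add: less_top)
      have k: "r powr (m * lam) * enn2real (In r) powr (1 - lam)
        \<le> Ctot powr lam * (J (r / \<sigma>) powr (1 - lam) - J (\<sigma> * r) powr (1 - lam)) / (lam - 1)"
        by (rule key[OF r Jp If Ip])
      have eq: "ennreal (r powr ee) * qfun lam \<sigma> a b r = ennreal (r powr ee * (enn2real (In r) / r ^ CARD('n)) powr (1 - lam))"
        using False by (simp add: qfun_eq ennreal_mult)
      have "r powr ee * (enn2real (In r) / r ^ CARD('n)) powr (1 - lam) = r powr (m * lam) * enn2real (In r) powr (1 - lam) / r"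
        unfolding ee_def using r Ip by (intro conv_powr) auto
      also have "\<dots> \<le> Cst * (J (r / \<sigma>) powr (1 - lam) - J (\<sigma> * r) powr (1 - lam)) / r"
      proof -
        have "r powr (m * lam) * enn2real (In r) powr (1 - lam) / r \<le> (Ctot powr lam * (J (r / \<sigma>) powr (1 - lam) - J (\<sigma> * r) powr (1 - lam)) / (lam - 1)) / r"
          using k r by (intro divide_right_mono) auto
        also have "\<dots> = Cst * (J (r / \<sigma>) powr (1 - lam) - J (\<sigma> * r) powr (1 - lam)) / r"
          by (simp add: Cst_def)
        finally show ?thesis .
      qed
      finally show ?thesis using eq by (simp add: ennreal_leI)
    qed
  qed
qed

end


context sol_setting
begin

lemma w_pos: "w x > 0" using apos[of x] bpos[of x] by (simp add: w_def)

lemma w_meas: "w \<in> borel_measurable lebesgue"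
  unfolding w_def[abs_def]
  by (intro borel_measurable_times powr_real_measurable[OF am] powr_real_measurable[OF bm]) simp_all

lemma pos_open:
  assumes "open U" "U \<noteq> {}"
  shows "(\<integral>\<^sup>+ x. ennreal (w x) * indicator U x \<partial>lebesgue) > 0"
proof (rule ccontr)
  assume "\<not> ?thesis"
  then have "(\<integral>\<^sup>+ x. ennreal (w x) * indicator U x \<partial>lebesgue) = 0" by (simp add: not_less)
  moreover have "(\<lambda>x. ennreal (w x) * indicator U x) \<in> borel_measurable lebesgue"
    using w_meas assms(1) by (intro borel_measurable_times_ennreal measurable_compose[OF w_meas]) (simp_all add: borel_measurable_indicator)
  ultimately have "AE x in lebesgue. ennreal (w x) * indicator U x = 0"
    by (simp add: nn_integral_0_iff_AE)
  then have "AE x in lebesgue. x \<notin> U"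
  proof eventually_elim
    case (elim x)
    show ?case
    proof
      assume "x \<in> U"
      then have "ennreal (w x) = 0" using elim by simp
      then show False using w_pos[of x] by (simp add: ennreal_eq_0_iff)
    qed
  qed
  then have "U \<in> null_sets lebesgue" using assms(1) by (subst AE_iff_null_sets) auto
  then have "negligible U" by (simp add: negligible_iff_null_sets)
  then show False using open_not_negligible[OF assms] by simp
qed

lemma lo:
  "\<exists>B\<ge>0. \<forall>r. 1 \<le> r \<longrightarrow> r < sqrt \<sigma> ^ N \<longrightarrow> ennreal (r powr ee) * qfun lam \<sigma> a b r \<le> ennreal B"
proof -
  define \<tau> where "\<tau> = sqrt \<sigma>"
  have \<tau>: "\<tau> > 1" "\<tau>^2 = \<sigma>" using sig by (auto simp: \<tau>_def)
  define U :: "nat \<Rightarrow> (real^'n) set" where "U j = {x. \<tau>^(j+1) / \<sigma> < norm x \<and> norm x < \<tau>^(j+2)}" for j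
  define K where "K j = (\<integral>\<^sup>+ x. ennreal (w x) * indicator (U j) x \<partial>lebesgue)" for j
  have Kpos: "K j > 0" for j
  proof -
    have "open (U j)" unfolding U_def by (intro open_Collect_conj open_Collect_less continuous_intros)
    moreover have "U j \<noteq> {}"
    proof -
      define x0 :: "real^'n" where "x0 = \<tau>^(j+1) *\<^sub>R axis undefined 1"
      have n: "norm x0 = \<tau>^(j+1)" using \<tau> by (simp add: x0_def)
      have "\<tau>^(j+1) / \<sigma> < \<tau>^(j+1)" using \<tau> sig by (simp add: divide_less_eq)
      moreover have "\<tau>^(j+1) < \<tau>^(j+2)" using \<tau> by (intro power_strict_increasing) auto
      ultimately have "x0 \<in> U j" using n by (simp add: U_def)
      then show ?thesis by blast
    qed
    ultimately show ?thesis unfolding K_def by (rule pos_open)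
  qed
  have KIn: "K j \<le> In r" if "\<tau>^j \<le> r" "r < \<tau>^(j+1)" for j r
    unfolding K_def In_def
  proof (intro nn_integral_mono)
    fix x
    have "x \<in> ann r" if "x \<in> U j"
    proof -
      have "norm x < \<tau>^(j+2)" using that by (simp add: U_def)
      also have "\<tau>^(j+2) = \<tau>^2 * \<tau>^j" by (simp only: power_add mult.commute)
      also have "\<dots> = \<sigma> * \<tau>^j" using \<tau>(2) by simp
      also have "\<dots> \<le> \<sigma> * r" using \<open>\<tau>^j \<le> r\<close> sig by simp
      finally have a: "norm x < \<sigma> * r" .
      have "r / \<sigma> < \<tau>^(j+1) / \<sigma>" using \<open>r < \<tau>^(j+1)\<close> sig by (simp add: divide_strict_right_mono)
      also have "\<dots> < norm x" using that by (simp add: U_def)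
      finally show ?thesis using a by (simp add: ann_def)
    qed
    then show "ennreal (w x) * indicator (U j) x \<le> ennreal (w x) * indicator (ann r) x"
      by (auto split: split_indicator)
  qed
  show ?thesis
  proof (cases "N = 0")
    case True
    then show ?thesis by (intro exI[of _ 0]) auto
  next
    case False
    define \<kappa> where "\<kappa> j = enn2real (min (K j) 1)" for j
    have \<kappa>pos: "\<kappa> j > 0" for j
    proof -
      have "min (K j) 1 > 0" using Kpos[of j] by simp
      moreover have "min (K j) 1 < \<infinity>"
        by (rule le_less_trans[OF min.cobounded2]) simp
      ultimately show ?thesis unfolding \<kappa>_def by (simp add: enn2real_positive_iff)
    qed
    define \<kappa>0 where "\<kappa>0 = Min (\<kappa> ` {..<N})"
    have \<kappa>0: "\<kappa>0 > 0"
    proof -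
      have "finite (\<kappa> ` {..<N})" "\<kappa> ` {..<N} \<noteq> {}" using False by auto
      then show ?thesis unfolding \<kappa>0_def using \<kappa>pos by (subst Min_gr_iff) auto
    qed
    have \<kappa>0le: "\<kappa>0 \<le> \<kappa> j" if "j < N" for j using that by (simp add: \<kappa>0_def)
    define T where "T = \<tau>^N"
    have T1: "T \<ge> 1" using \<tau> by (simp add: T_def one_le_power)
    define B where "B = T powr \<bar>ee\<bar> * (\<kappa>0 / T ^ CARD('n)) powr (1 - lam)"
    show ?thesis
    proof (intro exI[of _ B] conjI allI impI)
      show "B \<ge> 0" by (simp add: B_def)
      fix r assume r1: "1 \<le> r" and rN: "r < sqrt \<sigma> ^ N"
      then have rT: "r < T" by (simp add: T_def \<tau>_def)
      obtain j where j: "\<tau>^j \<le> r" "r < \<tau>^Suc j" using power_bracket[OF \<tau>(1) r1] by blast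
      have jN: "j < N"
      proof -
        have "\<tau>^j < \<tau>^N" using j rT by (simp add: T_def)
        then show ?thesis using power_less_imp_less_exp[OF \<tau>(1)] by blast
      qed
      show "ennreal (r powr ee) * qfun lam \<sigma> a b r \<le> ennreal B"
      proof (cases "In r = \<infinity>")
        case True then show ?thesis by (simp add: qfun_eq)
      next
        case False
        define Ir where "Ir = enn2real (In r)"
        have "min (K j) 1 \<le> In r" using KIn[of j r] j by (simp add: min.coboundedI1)
        then have "\<kappa> j \<le> Ir" unfolding \<kappa>_def Ir_def using False by (intro enn2real_mono) (auto simp: less_top)
        then have kI: "\<kappa>0 \<le> Ir" using \<kappa>0le[OF jN] by linarith
        have rn: "r ^ CARD('n) \<le> T ^ CARD('n)" using rT r1 by (intro power_mono) auto
        have rnpos: "r ^ CARD('n) > 0" using r1 by simp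
        have fr: "\<kappa>0 / T ^ CARD('n) \<le> Ir / r ^ CARD('n)"
          using kI rn rnpos \<kappa>0 by (intro frac_le) auto
        have p1: "(Ir / r ^ CARD('n)) powr (1 - lam) \<le> (\<kappa>0 / T ^ CARD('n)) powr (1 - lam)"
          using fr \<kappa>0 T1 lam1 by (intro powr_mono2') auto
        have p2: "r powr ee \<le> T powr \<bar>ee\<bar>"
        proof -
          have "r powr ee \<le> r powr \<bar>ee\<bar>" using r1 by (intro powr_mono) auto
          also have "\<dots> \<le> T powr \<bar>ee\<bar>" using r1 rT by (intro powr_mono2) auto
          finally show ?thesis .
        qed
        have "r powr ee * (Ir / r ^ CARD('n)) powr (1 - lam) \<le> B"
          unfolding B_def using p1 p2 by (intro mult_mono) auto
        then show ?thesis using False by (simp add: qfun_eq Ir_def ennreal_mult[symmetric] ennreal_leI)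
      qed
    qed
  qed
qed

lemma finite_int:
  assumes "\<not> (AE x in lebesgue. u x = 0)"
  shows "(\<integral>\<^sup>+ r \<in> {1..}. ennreal (r powr ((real m - real CARD('n)) * lam + real CARD('n) - 1))
            * qfun lam \<sigma> a b r \<partial>lborel) < \<infinity>"
proof -
  obtain \<rho>0 where \<rho>0: "\<rho>0 > 0" "J \<rho>0 > 0" using J_pos[OF assms] by blast
  have \<tau>: "sqrt \<sigma> > 1" using sig by simp
  obtain N where N: "max 1 (\<sigma> * \<rho>0) < sqrt \<sigma> ^ N" using real_arch_pow[OF \<tau>] by blast
  define R where "R = sqrt \<sigma> ^ N"
  have R1: "R \<ge> 1" using N by (simp add: R_def)
  have "\<rho>0 \<le> R / \<sigma>" using N sig by (simp add: R_def field_simps)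
  then have "J \<rho>0 \<le> J (R / \<sigma>)" by (rule J_mono)
  then have JR: "J (R / \<sigma>) > 0" using \<rho>0 by simp
  obtain B where B: "B \<ge> 0" "\<forall>r. 1 \<le> r \<longrightarrow> r < R \<longrightarrow> ennreal (r powr ee) * qfun lam \<sigma> a b r \<le> ennreal B"
    using lo[of N] by (auto simp: R_def)
  have "(\<integral>\<^sup>+ r \<in> {1..}. ennreal (r powr ee) * qfun lam \<sigma> a b r \<partial>lborel) < \<infinity>"
  proof (rule integral_finite[where Jf=J and R=R and B=B and Cst=Cst and lam=lam])
    show "1 < \<sigma>" by (rule sig)
    show "1 < lam" by (rule lam1)
    show "0 \<le> Cst" by (rule Cst0)
    show "1 \<le> R" by (rule R1)
    show "0 < J (R / \<sigma>)" by (rule JR)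
    show "\<And>a b. 0 < a \<Longrightarrow> a \<le> b \<Longrightarrow> J a \<le> J b" by (rule J_mono)
    show "\<And>r. R \<le> r \<Longrightarrow> ennreal (r powr ee) * qfun lam \<sigma> a b r
        \<le> ennreal (Cst * (J (r / \<sigma>) powr (1 - lam) - J (\<sigma> * r) powr (1 - lam)) / r)"
      by (rule hi[OF R1 JR])
    show "\<And>r. 1 \<le> r \<Longrightarrow> r < R \<Longrightarrow> ennreal (r powr ee) * qfun lam \<sigma> a b r \<le> ennreal B"
      using B by blast
  qed (rule B(1))
  then show ?thesis by (simp add: ee_def)
qed

end

theorem theorem2p2:
  fixes m :: nat and lam \<sigma> :: real
    and A :: "('n::finite \<Rightarrow> nat) \<Rightarrow> real^'n \<Rightarrow> real \<Rightarrow> real"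
    and a b u :: "real^'n \<Rightarrow> real"
  assumes "m \<ge> 1" and "lam > 1"
    and "a \<in> borel_measurable lebesgue" and "\<And>x. a x > 0"
    and "b \<in> borel_measurable lebesgue" and "\<And>x. b x > 0"
    and "AE x in lebesgue. \<forall>\<zeta> \<alpha>. mi_order \<alpha> = m \<longrightarrow> \<bar>A \<alpha> x \<zeta>\<bar> \<le> a x * \<bar>\<zeta>\<bar>"
    and "\<sigma> > 1"
    and "(\<integral>\<^sup>+ r \<in> {1..}. ennreal (r powr ((real m - real CARD('n)) * lam + real CARD('n) - 1))
            * qfun lam \<sigma> a b r \<partial>lborel) = \<infinity>"
    and "is_solution m lam A b u"
  shows "AE x in lebesgue. u x = 0"
proof (rule ccontr)
  assume na: "\<not> (AE x in lebesgue. u x = 0)"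
  interpret sol_setting m lam \<sigma> A a b u
    using assms by (unfold_locales) auto
  from finite_int[OF na] assms(9) show False by simp
qed

end
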